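(* Let $\varphi\colon (A,m,K)\to (B,n,L)$ be a local homomorphism of noetherian local rings. For a proper ideal $I$ of $A$, let $\pi_I\colon A\to A/I$ and $\pi_{IB}\colon B\to B/IB$ be the canonical surjections. (1) $\operatorname{rd}(\pi_I)\geq \operatorname{rd}(\pi_{IB})$ for every proper ideal $I$ of $A$. (2) $\varphi$ is basically regular if and only if $\operatorname{rd}(\pi_I)=\operatorname{rd}(\pi_{IB})$ for each proper ideal $I$ of $A$.
   Context: All rings are commutative and noetherian with identity. A local homomorphism $\varphi\colon (A,m,K)\to(B,n,L)$ satisfies $\varphi(m)\subseteq n$. The regularity defect $\operatorname{rd}(\varphi)$ is the $L$-dimension of the kernel of the natural $L$-linear map $m/m^2\otimes_K L\to n/n^2$, $\bar x\otimes\bar b\mapsto \overline{\varphi(x)b}$; $\varphi$ is basically regular if for every minimal basis (minimal generating set) $x_1,\dots,x_r$ of $m$, the elements $\varphi(x_1),\dots,\varphi(x_r)$ are part of a minimal basis of $n$ (vacuously true if $A$ is a field). *)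

theory Defs
  imports "HOL-Algebra.Algebra"
begin

definition noetherian_ring :: "('a, 'c) ring_scheme \<Rightarrow> bool" where
  "noetherian_ring R \<longleftrightarrow> cring R \<and>
     (\<forall>I. ideal I R \<longrightarrow> (\<exists>S. finite S \<and> S \<subseteq> carrier R \<and> I = Idl\<^bsub>R\<^esub> S))"

definition noetherian_local_ring :: "('a, 'c) ring_scheme \<Rightarrow> bool" where
  "noetherian_local_ring R \<longleftrightarrow> noetherian_ring R \<and> (\<exists>!m. maximalideal m R)"

definition max_ideal :: "('a, 'c) ring_scheme \<Rightarrow> 'a set" where
  "max_ideal R = (THE m. maximalideal m R)"

definition local_hom :: "('a, 'c) ring_scheme \<Rightarrow> ('b, 'd) ring_scheme \<Rightarrow> ('a \<Rightarrow> 'b) \<Rightarrow> bool" where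
  "local_hom A B \<phi> \<longleftrightarrow> \<phi> \<in> ring_hom A B \<and> \<phi> ` max_ideal A \<subseteq> max_ideal B"

definition ideal_sq :: "('a, 'c) ring_scheme \<Rightarrow> 'a set \<Rightarrow> 'a set" where
  "ideal_sq R I = Idl\<^bsub>R\<^esub> {a \<otimes>\<^bsub>R\<^esub> b | a b. a \<in> I \<and> b \<in> I}"

definition num_gens :: "('a, 'c) ring_scheme \<Rightarrow> 'a set \<Rightarrow> nat" where
  "num_gens R I = (LEAST k. \<exists>xs. length xs = k \<and> set xs \<subseteq> I \<and> Idl\<^bsub>R\<^esub> (set xs) = I)"

definition minimal_basis :: "('a, 'c) ring_scheme \<Rightarrow> 'a list \<Rightarrow> bool" where
  "minimal_basis R xs \<longleftrightarrow> set xs \<subseteq> max_ideal R \<and> Idl\<^bsub>R\<^esub> (set xs) = max_ideal R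
      \<and> length xs = num_gens R (max_ideal R)"

definition basically_regular :: "('a, 'c) ring_scheme \<Rightarrow> ('b, 'd) ring_scheme \<Rightarrow> ('a \<Rightarrow> 'b) \<Rightarrow> bool" where
  "basically_regular A B \<phi> \<longleftrightarrow>
     (\<forall>xs. minimal_basis A xs \<longrightarrow> (\<exists>ys. minimal_basis B (map \<phi> xs @ ys)))"

text \<open>Vectors v 0, ..., v (k-1) in B^r are linearly independent modulo the maximal ideal n,
  i.e. their residues are L-linearly independent in L^r, L = B/n.\<close>
definition indep_mod :: "('b, 'd) ring_scheme \<Rightarrow> 'b set \<Rightarrow> nat \<Rightarrow> (nat \<Rightarrow> nat \<Rightarrow> 'b) \<Rightarrow> nat \<Rightarrow> bool" where
  "indep_mod B n r v k \<longleftrightarrow>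
     (\<forall>c. (\<forall>j<k. c j \<in> carrier B) \<and>
          (\<forall>i<r. (\<Oplus>\<^bsub>B\<^esub>j\<in>{..<k}. c j \<otimes>\<^bsub>B\<^esub> v j i) \<in> n)
          \<longrightarrow> (\<forall>j<k. c j \<in> n))"

text \<open>Kernel of m/m^2 \<otimes>_K L \<rightarrow> n/n^2, using the identification m/m^2 \<otimes>_K L = L^r given
  by a minimal basis x_1..x_r of m (a K-basis of m/m^2): preimage in B^r of the kernel.\<close>
definition rd_kernel :: "('a, 'c) ring_scheme \<Rightarrow> ('b, 'd) ring_scheme \<Rightarrow> ('a \<Rightarrow> 'b) \<Rightarrow> (nat \<Rightarrow> 'b) set" where
  "rd_kernel A B \<phi> =
     (let xs = (SOME xs. minimal_basis A xs); r = length xs in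
      {b. (\<forall>i<r. b i \<in> carrier B) \<and>
          (\<Oplus>\<^bsub>B\<^esub>i\<in>{..<r}. \<phi> (xs ! i) \<otimes>\<^bsub>B\<^esub> b i) \<in> ideal_sq B (max_ideal B)})"

text \<open>Regularity defect: the L-dimension of that kernel.\<close>
definition rd :: "('a, 'c) ring_scheme \<Rightarrow> ('b, 'd) ring_scheme \<Rightarrow> ('a \<Rightarrow> 'b) \<Rightarrow> nat" where
  "rd A B \<phi> =
     (let r = length (SOME xs. minimal_basis A xs) in
      (GREATEST k. \<exists>v. (\<forall>j<k. v j \<in> rd_kernel A B \<phi>) \<and> indep_mod B (max_ideal B) r v k))"

end

theory Submission
  imports Defs
begin

lemma ideal_zero: "ideal I R \<Longrightarrow> \<zero>\<^bsub>R\<^esub> \<in> I"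
  by (metis additive_subgroup.zero_closed ideal.axioms(1))
lemma ideal_add: "ideal I R \<Longrightarrow> a \<in> I \<Longrightarrow> b \<in> I \<Longrightarrow> a \<oplus>\<^bsub>R\<^esub> b \<in> I"
  by (metis additive_subgroup.a_closed ideal.axioms(1))

lemma (in cring) ideal_crit:
  assumes "I \<subseteq> carrier R" "\<zero> \<in> I"
    and "\<And>a b. a \<in> I \<Longrightarrow> b \<in> I \<Longrightarrow> a \<oplus> b \<in> I"
    and "\<And>a x. a \<in> I \<Longrightarrow> x \<in> carrier R \<Longrightarrow> x \<otimes> a \<in> I"
  shows "ideal I R"
proof (rule idealI)
  show "ring R" by (rule ring_axioms)
  show "subgroup I (add_monoid R)"
  proof
    fix a assume a: "a \<in> I"
    have "\<ominus> a = (\<ominus> \<one>) \<otimes> a" using a assms(1) by (simp add: l_minus subsetD)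
    then show "inv\<^bsub>add_monoid R\<^esub> a \<in> I" using assms(4)[OF a, of "\<ominus> \<one>"] by (simp add: a_inv_def)
  qed (use assms in auto)
  show "\<And>a x. a \<in> I \<Longrightarrow> x \<in> carrier R \<Longrightarrow> x \<otimes> a \<in> I" by (rule assms(4))
  show "\<And>a x. a \<in> I \<Longrightarrow> x \<in> carrier R \<Longrightarrow> a \<otimes> x \<in> I"
    using assms(1,4) m_comm by (metis subsetD)
qed

lemma (in cring) krull:
  assumes J: "ideal J R" "\<one> \<notin> J"
  shows "\<exists>N. maximalideal N R \<and> J \<subseteq> N"
proof -
  define \<A> where "\<A> = {K. ideal K R \<and> J \<subseteq> K \<and> \<one> \<notin> K}"
  have ne: "\<A> \<noteq> {}" using J unfolding \<A>_def by blast
  have ch: "\<Union>\<C> \<in> \<A>" if C: "\<C> \<noteq> {}" "subset.chain \<A> \<C>" for \<C>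
  proof -
    have CA: "\<C> \<subseteq> \<A>" and tot: "\<And>K1 K2. K1 \<in> \<C> \<Longrightarrow> K2 \<in> \<C> \<Longrightarrow> K1 \<subseteq> K2 \<or> K2 \<subseteq> K1"
      using C(2) unfolding subset.chain_def by auto
    have idl: "\<And>K. K \<in> \<C> \<Longrightarrow> ideal K R" using CA unfolding \<A>_def by auto
    obtain K0 where K0: "K0 \<in> \<C>" using C(1) by blast
    have "ideal (\<Union>\<C>) R"
    proof (rule ideal_crit)
      show "\<Union>\<C> \<subseteq> carrier R"
      proof
        fix a assume "a \<in> \<Union>\<C>"
        then obtain K where "K \<in> \<C>" "a \<in> K" by blast
        then show "a \<in> carrier R" using idl ideal.Icarr by metis
      qed
      have "\<zero> \<in> K0" using ideal_zero[OF idl[OF K0]] .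
      then show "\<zero> \<in> \<Union>\<C>" using K0 by blast
      show "a \<oplus> b \<in> \<Union>\<C>" if ab: "a \<in> \<Union>\<C>" "b \<in> \<Union>\<C>" for a b
      proof -
        obtain K1 K2 where XY: "K1 \<in> \<C>" "K2 \<in> \<C>" "a \<in> K1" "b \<in> K2" using ab by blast
        show ?thesis
        proof (cases "K1 \<subseteq> K2")
          case True then show ?thesis using XY ideal_add[OF idl[of K2]] by blast
        next
          case False then have "K2 \<subseteq> K1" using tot XY by blast
          then show ?thesis using XY ideal_add[OF idl[of K1]] by blast
        qed
      qed
      show "x \<otimes> a \<in> \<Union>\<C>" if ax: "a \<in> \<Union>\<C>" "x \<in> carrier R" for a x
      proof -
        obtain K where "K \<in> \<C>" "a \<in> K" using ax by blast
        then show ?thesis using ax(2) ideal.I_l_closed[OF idl] by blast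
      qed
    qed
    moreover have "J \<subseteq> \<Union>\<C>" using K0 CA unfolding \<A>_def by blast
    moreover have "\<one> \<notin> \<Union>\<C>" using CA unfolding \<A>_def by blast
    ultimately show ?thesis unfolding \<A>_def by blast
  qed
  obtain N where N: "N \<in> \<A>" "\<And>K. K \<in> \<A> \<Longrightarrow> N \<subseteq> K \<Longrightarrow> K = N"
    using subset_Zorn_nonempty[OF ne ch] by blast
  have "maximalideal N R"
  proof (rule maximalidealI)
    show "ideal N R" using N unfolding \<A>_def by blast
    show "carrier R \<noteq> N" using N unfolding \<A>_def by blast
    fix K assume K: "ideal K R" "N \<subseteq> K" "K \<subseteq> carrier R"
    show "K = N \<or> K = carrier R"
    proof (cases "\<one> \<in> K")
      case True then show ?thesis using ideal.one_imp_carrier[OF K(1)] by blast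
    next
      case False then have "K \<in> \<A>" using K N(1) unfolding \<A>_def by blast
      then show ?thesis using N(2) K(2) by blast
    qed
  qed
  then show ?thesis using N(1) unfolding \<A>_def by blast
qed

locale lring = cring R for R (structure) + fixes M
  assumes M_max: "maximalideal M R" and M_unique: "\<And>N. maximalideal N R \<Longrightarrow> N = M"
begin

lemma M_ideal: "ideal M R" using M_max maximalideal.axioms(1) by blast

lemma one_notin: "\<one> \<notin> M"
  using M_max ideal.one_imp_carrier[OF M_ideal] maximalideal.I_notcarr by metis

lemma M_carr: "x \<in> M \<Longrightarrow> x \<in> carrier R" using ideal.Icarr[OF M_ideal] .

lemma M_add: "x \<in> M \<Longrightarrow> y \<in> M \<Longrightarrow> x \<oplus> y \<in> M"
  using additive_subgroup.a_closed[OF ideal.axioms(1)[OF M_ideal]] by blast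

lemma M_zero: "\<zero> \<in> M"
  using additive_subgroup.zero_closed[OF ideal.axioms(1)[OF M_ideal]] by blast

lemma M_mult: "x \<in> M \<Longrightarrow> y \<in> carrier R \<Longrightarrow> y \<otimes> x \<in> M"
  using ideal.I_l_closed[OF M_ideal] by blast

lemma M_mult2: "x \<in> M \<Longrightarrow> y \<in> carrier R \<Longrightarrow> x \<otimes> y \<in> M"
  using ideal.I_r_closed[OF M_ideal] by blast

lemma M_neg: "x \<in> M \<Longrightarrow> \<ominus> x \<in> M"
  using additive_subgroup.a_inv_closed[OF ideal.axioms(1)[OF M_ideal]] by blast

lemma M_minus: "x \<in> M \<Longrightarrow> y \<in> M \<Longrightarrow> x \<ominus> y \<in> M"
  by (simp add: a_minus_def M_add M_neg)

lemma proper_sub_M: "ideal J R \<Longrightarrow> \<one> \<notin> J \<Longrightarrow> J \<subseteq> M"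
  using krull M_unique by blast

lemma unit: assumes "x \<in> carrier R" "x \<notin> M" shows "x \<in> Units R"
proof (cases "\<one> \<in> PIdl x")
  case True
  then obtain y where y: "y \<in> carrier R" "\<one> = y \<otimes> x" unfolding cgenideal_def by blast
  then show ?thesis using assms(1) m_comm unfolding Units_def by auto
next
  case False
  then have "PIdl x \<subseteq> M" using proper_sub_M cgenideal_ideal[OF assms(1)] by blast
  then show ?thesis using cgenideal_self[OF assms(1)] assms(2) by blast
qed

lemma inv_l: "x \<in> carrier R \<Longrightarrow> x \<notin> M \<Longrightarrow> inv x \<otimes> x = \<one>"
  using unit by simp
lemma inv_r: "x \<in> carrier R \<Longrightarrow> x \<notin> M \<Longrightarrow> x \<otimes> inv x = \<one>"
  using unit by simp
lemma inv_c: "x \<in> carrier R \<Longrightarrow> x \<notin> M \<Longrightarrow> inv x \<in> carrier R"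
  using unit by simp

lemma M_finsum: "finite A \<Longrightarrow> (\<And>i. i \<in> A \<Longrightarrow> f i \<in> M) \<Longrightarrow> (\<Oplus>i\<in>A. f i) \<in> M"
proof (induction A rule: finite_induct)
  case empty then show ?case using M_zero by simp
next
  case (insert a A)
  then show ?case using M_carr M_add by (subst finsum_insert) (auto simp: Pi_def)
qed

end


definition vecs :: "('a, 'c) ring_scheme \<Rightarrow> nat \<Rightarrow> (nat \<Rightarrow> 'a) \<Rightarrow> bool" where
  "vecs R r a \<longleftrightarrow> (\<forall>i<r. a i \<in> carrier R)"

definition indepS :: "('a, 'c) ring_scheme \<Rightarrow> 'a set \<Rightarrow> nat \<Rightarrow> (nat \<Rightarrow> nat \<Rightarrow> 'a) \<Rightarrow> nat set \<Rightarrow> bool" where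
  "indepS R M r w J \<longleftrightarrow> (\<forall>c. (\<forall>j\<in>J. c j \<in> carrier R) \<and>
      (\<forall>i<r. (\<Oplus>\<^bsub>R\<^esub>j\<in>J. c j \<otimes>\<^bsub>R\<^esub> w j i) \<in> M) \<longrightarrow> (\<forall>j\<in>J. c j \<in> M))"

definition spanS :: "('a, 'c) ring_scheme \<Rightarrow> 'a set \<Rightarrow> nat \<Rightarrow> nat set \<Rightarrow> (nat \<Rightarrow> nat \<Rightarrow> 'a) \<Rightarrow> (nat \<Rightarrow> 'a) \<Rightarrow> bool" where
  "spanS R M r L g a \<longleftrightarrow> (\<exists>\<beta>. (\<forall>l\<in>L. \<beta> l \<in> carrier R) \<and>
      (\<forall>i<r. a i \<ominus>\<^bsub>R\<^esub> (\<Oplus>\<^bsub>R\<^esub>l\<in>L. \<beta> l \<otimes>\<^bsub>R\<^esub> g l i) \<in> M))"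

definition dimS :: "('a, 'c) ring_scheme \<Rightarrow> 'a set \<Rightarrow> nat \<Rightarrow> (nat \<Rightarrow> 'a) set \<Rightarrow> nat" where
  "dimS R M r P = (GREATEST k. \<exists>u. (\<forall>j<k. u j \<in> P) \<and> indep_mod R M r u k)"

lemma indep_mod_eq: "indep_mod R M r u k = indepS R M r u {..<k}"
  unfolding indep_mod_def indepS_def by (simp add: Ball_def lessThan_iff)

context cring
begin

lemma fs_neg: "finite A \<Longrightarrow> f \<in> A \<rightarrow> carrier R \<Longrightarrow> (\<Oplus>i\<in>A. \<ominus> f i) = \<ominus> (\<Oplus>i\<in>A. f i)"
proof (induction A rule: finite_induct)
  case empty then show ?case by simp
next
  case (insert a A)
  then have fa: "f a \<in> carrier R" and fA: "f \<in> A \<rightarrow> carrier R" by auto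
  have "(\<Oplus>i\<in>insert a A. \<ominus> f i) = \<ominus> f a \<oplus> (\<Oplus>i\<in>A. \<ominus> f i)"
    using insert fa fA by (subst finsum_insert) auto
  also have "\<dots> = \<ominus> f a \<oplus> \<ominus> (\<Oplus>i\<in>A. f i)" using insert fA by simp
  also have "\<dots> = \<ominus> (f a \<oplus> (\<Oplus>i\<in>A. f i))" using fa fA by (simp add: minus_add)
  also have "\<dots> = \<ominus> (\<Oplus>i\<in>insert a A. f i)" using insert fa fA by (subst finsum_insert) auto
  finally show ?case .
qed

lemma fs_minus: "finite A \<Longrightarrow> f \<in> A \<rightarrow> carrier R \<Longrightarrow> g \<in> A \<rightarrow> carrier R \<Longrightarrow>
   (\<Oplus>i\<in>A. f i \<ominus> g i) = (\<Oplus>i\<in>A. f i) \<ominus> (\<Oplus>i\<in>A. g i)"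
proof -
  assume A: "finite A" "f \<in> A \<rightarrow> carrier R" "g \<in> A \<rightarrow> carrier R"
  have "(\<Oplus>i\<in>A. f i \<ominus> g i) = (\<Oplus>i\<in>A. f i \<oplus> \<ominus> g i)" by (simp add: a_minus_def)
  also have "\<dots> = (\<Oplus>i\<in>A. f i) \<oplus> (\<Oplus>i\<in>A. \<ominus> g i)" using A by (subst finsum_addf) auto
  also have "\<dots> = (\<Oplus>i\<in>A. f i) \<ominus> (\<Oplus>i\<in>A. g i)" using fs_neg[OF A(1) A(3)] by (simp add: a_minus_def)
  finally show ?thesis .
qed

lemma fs_swap: "finite A \<Longrightarrow> finite B \<Longrightarrow> (\<And>i j. i \<in> A \<Longrightarrow> j \<in> B \<Longrightarrow> f i j \<in> carrier R) \<Longrightarrow>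
  (\<Oplus>i\<in>A. \<Oplus>j\<in>B. f i j) = (\<Oplus>j\<in>B. \<Oplus>i\<in>A. f i j)"
proof (induction A rule: finite_induct)
  case empty then show ?case by simp
next
  case (insert a A)
  have fc: "\<And>i j. i \<in> A \<Longrightarrow> j \<in> B \<Longrightarrow> f i j \<in> carrier R" using insert.prems by blast
  have fa: "\<And>j. j \<in> B \<Longrightarrow> f a j \<in> carrier R" using insert.prems by blast
  have IH: "(\<Oplus>i\<in>A. \<Oplus>j\<in>B. f i j) = (\<Oplus>j\<in>B. \<Oplus>i\<in>A. f i j)" using insert.IH[OF insert.prems(1) fc] .
  have "(\<Oplus>i\<in>insert a A. \<Oplus>j\<in>B. f i j) = (\<Oplus>j\<in>B. f a j) \<oplus> (\<Oplus>i\<in>A. \<Oplus>j\<in>B. f i j)"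
    using insert.hyps fc fa by (subst finsum_insert) (auto simp: Pi_def intro!: finsum_closed)
  also have "\<dots> = (\<Oplus>j\<in>B. f a j) \<oplus> (\<Oplus>j\<in>B. \<Oplus>i\<in>A. f i j)" using IH by simp
  also have "\<dots> = (\<Oplus>j\<in>B. f a j \<oplus> (\<Oplus>i\<in>A. f i j))"
    using fc fa by (subst finsum_addf) (auto simp: Pi_def intro!: finsum_closed)
  also have "\<dots> = (\<Oplus>j\<in>B. \<Oplus>i\<in>insert a A. f i j)"
  proof (intro finsum_cong')
    fix j assume j: "j \<in> B"
    show "f a j \<oplus> (\<Oplus>i\<in>A. f i j) = (\<Oplus>i\<in>insert a A. f i j)"
      using insert.hyps fc fa j by (subst finsum_insert) (auto simp: Pi_def)
  qed (use fc fa in \<open>auto simp: Pi_def intro!: finsum_closed\<close>)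
  finally show ?case .
qed

lemma fs_delta: "i \<in> A \<Longrightarrow> finite A \<Longrightarrow> f \<in> A \<rightarrow> carrier R \<Longrightarrow>
   (\<Oplus>l\<in>A. f l \<otimes> (if l = i then \<one> else \<zero>)) = f i"
proof -
  assume a: "i \<in> A" "finite A" "f \<in> A \<rightarrow> carrier R"
  have "(\<Oplus>l\<in>A. f l \<otimes> (if l = i then \<one> else \<zero>)) = (\<Oplus>l\<in>A. if i = l then f l else \<zero>)"
    using a by (intro finsum_cong') (auto simp: Pi_def)
  also have "\<dots> = f i" by (rule finsum_singleton[OF a])
  finally show ?thesis .
qed

lemma fs_delta2: "i \<in> A \<Longrightarrow> finite A \<Longrightarrow> f \<in> A \<rightarrow> carrier R \<Longrightarrow>
   (\<Oplus>l\<in>A. (if i = l then \<one> else \<zero>) \<otimes> f l) = f i"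
proof -
  assume a: "i \<in> A" "finite A" "f \<in> A \<rightarrow> carrier R"
  have "(\<Oplus>l\<in>A. (if i = l then \<one> else \<zero>) \<otimes> f l) = (\<Oplus>l\<in>A. if i = l then f l else \<zero>)"
    using a by (intro finsum_cong') (auto simp: Pi_def)
  also have "\<dots> = f i" by (rule finsum_singleton[OF a])
  finally show ?thesis .
qed

end


context cring
begin

lemma alg1: "a \<in> carrier R \<Longrightarrow> S \<in> carrier R \<Longrightarrow> t \<in> carrier R \<Longrightarrow> cd \<in> carrier R \<Longrightarrow> t \<otimes> cd = \<one> \<Longrightarrow>
  a \<ominus> ((\<ominus> t) \<otimes> S) = t \<otimes> (cd \<otimes> a \<oplus> S)"
proof -
  assume c: "a \<in> carrier R" "S \<in> carrier R" "t \<in> carrier R" "cd \<in> carrier R" and e: "t \<otimes> cd = \<one>"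
  have "t \<otimes> (cd \<otimes> a \<oplus> S) = (t \<otimes> cd) \<otimes> a \<oplus> t \<otimes> S" using c by algebra
  also have "\<dots> = a \<oplus> t \<otimes> S" using e c by simp
  also have "\<dots> = a \<ominus> ((\<ominus> t) \<otimes> S)" using c by algebra
  finally show ?thesis by simp
qed

lemma alg2: "x \<in> carrier R \<Longrightarrow> P \<in> carrier R \<Longrightarrow> b \<in> carrier R \<Longrightarrow> g \<in> carrier R \<Longrightarrow>
  x \<ominus> P = (x \<ominus> (b \<otimes> g \<oplus> P)) \<oplus> b \<otimes> g"
  by algebra

lemma alg3: "x \<in> carrier R \<Longrightarrow> y \<in> carrier R \<Longrightarrow> P \<in> carrier R \<Longrightarrow> Q \<in> carrier R \<Longrightarrow>
  s \<in> carrier R \<Longrightarrow> b0 \<in> carrier R \<Longrightarrow> g \<in> carrier R \<Longrightarrow>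
  (x \<ominus> s \<otimes> y) \<ominus> (P \<ominus> s \<otimes> Q) = (x \<ominus> ((s \<otimes> b0) \<otimes> g \<oplus> P)) \<ominus> s \<otimes> (y \<ominus> (b0 \<otimes> g \<oplus> Q))"
  by algebra

lemma alg4: "y \<in> carrier R \<Longrightarrow> P \<in> carrier R \<Longrightarrow> K \<in> carrier R \<Longrightarrow>
  (\<ominus> K) \<otimes> y \<oplus> P = P \<ominus> K \<otimes> y"
  by algebra

lemma alg5: "x \<in> carrier R \<Longrightarrow> y \<in> carrier R \<Longrightarrow> s \<in> carrier R \<Longrightarrow> g \<in> carrier R \<Longrightarrow>
  (x \<ominus> s \<otimes> y) \<otimes> g = x \<otimes> g \<ominus> s \<otimes> (y \<otimes> g)"
  by algebra

lemma alg6: "x \<in> carrier R \<Longrightarrow> y \<in> carrier R \<Longrightarrow> s \<in> carrier R \<Longrightarrow> c \<in> carrier R \<Longrightarrow>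
  c \<otimes> (x \<ominus> s \<otimes> y) = c \<otimes> x \<ominus> (c \<otimes> s) \<otimes> y"
  by algebra

end

context lring
begin

lemma add_indep:
  assumes J: "finite J" "d \<notin> J" and wv: "\<forall>j\<in>J. vecs R r (w j)" and av: "vecs R r a"
    and ind: "indepS R M r w J" and nsp: "\<not> spanS R M r J w a"
  shows "indepS R M r (w(d:=a)) (insert d J)"
  unfolding indepS_def
proof (intro allI impI)
  fix c assume c: "(\<forall>j\<in>insert d J. c j \<in> carrier R) \<and>
      (\<forall>i<r. (\<Oplus>j\<in>insert d J. c j \<otimes> (w(d := a)) j i) \<in> M)"
  have cc: "\<And>j. j \<in> J \<Longrightarrow> c j \<in> carrier R" and cd: "c d \<in> carrier R" using c by auto
  have wc: "\<And>j i. j \<in> J \<Longrightarrow> i < r \<Longrightarrow> w j i \<in> carrier R" using wv unfolding vecs_def by blast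
  have ac: "\<And>i. i < r \<Longrightarrow> a i \<in> carrier R" using av unfolding vecs_def by blast
  define S where "S i = (\<Oplus>j\<in>J. c j \<otimes> w j i)" for i
  have Sc: "\<And>i. i < r \<Longrightarrow> S i \<in> carrier R" unfolding S_def using cc wc by (auto intro!: finsum_closed)
  have split: "(\<Oplus>j\<in>insert d J. c j \<otimes> (w(d := a)) j i) = c d \<otimes> a i \<oplus> S i" if i: "i < r" for i
  proof -
    have "(\<Oplus>j\<in>insert d J. c j \<otimes> (w(d := a)) j i) = c d \<otimes> a i \<oplus> (\<Oplus>j\<in>J. c j \<otimes> (w(d := a)) j i)"
      using J cc cd wc ac i by (subst finsum_insert) (auto simp: Pi_def)
    also have "(\<Oplus>j\<in>J. c j \<otimes> (w(d := a)) j i) = S i"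
      unfolding S_def using J cc wc i by (intro finsum_cong') (auto simp: Pi_def)
    finally show ?thesis .
  qed
  have tot: "\<And>i. i < r \<Longrightarrow> c d \<otimes> a i \<oplus> S i \<in> M" using c split by auto
  have cdM: "c d \<in> M"
  proof (rule ccontr)
    assume nM: "c d \<notin> M"
    define t where "t = inv (c d)"
    have tc: "t \<in> carrier R" and tcd: "t \<otimes> c d = \<one>" unfolding t_def using inv_c inv_l cd nM by auto
    have "spanS R M r J w a"
      unfolding spanS_def
    proof (intro exI[of _ "\<lambda>j. (\<ominus> t) \<otimes> c j"] conjI ballI allI impI)
      show "(\<ominus> t) \<otimes> c j \<in> carrier R" if "j \<in> J" for j using that tc cc by simp
      fix i assume i: "i < r"
      have "(\<Oplus>j\<in>J. (\<ominus> t) \<otimes> c j \<otimes> w j i) = (\<Oplus>j\<in>J. (\<ominus> t) \<otimes> (c j \<otimes> w j i))"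
        using tc cc wc i by (intro finsum_cong') (auto simp: Pi_def m_assoc)
      also have "\<dots> = (\<ominus> t) \<otimes> S i" unfolding S_def
        using tc cc wc i J by (subst finsum_rdistr) (auto simp: Pi_def)
      finally have e: "(\<Oplus>j\<in>J. (\<ominus> t) \<otimes> c j \<otimes> w j i) = (\<ominus> t) \<otimes> S i" .
      show "a i \<ominus> (\<Oplus>j\<in>J. (\<ominus> t) \<otimes> c j \<otimes> w j i) \<in> M"
        unfolding e using alg1[OF ac[OF i] Sc[OF i] tc cd tcd] M_mult[OF tot[OF i] tc] by simp
    qed
    then show False using nsp by blast
  qed
  have "\<forall>j\<in>J. c j \<in> M"
    using ind[unfolded indepS_def, rule_format, of c]
  proof -
    have "\<forall>i<r. S i \<in> M"
    proof (intro allI impI)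
      fix i assume i: "i < r"
      have "S i = (c d \<otimes> a i \<oplus> S i) \<ominus> c d \<otimes> a i" using cd ac[OF i] Sc[OF i] by algebra
      then show "S i \<in> M" using M_minus[OF tot[OF i] M_mult2[OF cdM ac[OF i]]] by simp
    qed
    then show ?thesis using ind[unfolded indepS_def, rule_format, of c] cc unfolding S_def by blast
  qed
  then show "\<forall>j\<in>insert d J. c j \<in> M" using cdM by blast
qed

lemma steinitz:
  assumes "finite L"
  shows "\<And>J w. finite J \<Longrightarrow> (\<forall>j\<in>J. vecs R r (w j)) \<Longrightarrow> (\<forall>l\<in>L. vecs R r (g l)) \<Longrightarrow>
     indepS R M r w J \<Longrightarrow> (\<forall>j\<in>J. spanS R M r L g (w j)) \<Longrightarrow> card J \<le> card L"
  using assms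
proof (induction L rule: finite_induct)
  case empty
  fix J w assume J: "finite J" "\<forall>j\<in>J. vecs R r (w j)" "indepS R M r w J" "\<forall>j\<in>J. spanS R M r {} g (w j)"
  show "card J \<le> card {}"
  proof (rule ccontr)
    assume "\<not> card J \<le> card {}"
    then have "J \<noteq> {}" by auto
    then obtain j0 where j0: "j0 \<in> J" by blast
    have wM: "w j i \<in> M" if jw: "j \<in> J" "i < r" for j i
    proof -
      obtain \<beta> where "\<forall>i<r. w j i \<ominus> (\<Oplus>l\<in>{}. \<beta> l \<otimes> g l i) \<in> M"
        using J(4) jw(1) unfolding spanS_def by blast
      then have "w j i \<ominus> \<zero> \<in> M" using jw(2) by simp
      moreover have "w j i \<in> carrier R" using J(2) jw unfolding vecs_def by blast
      ultimately show ?thesis by (simp add: a_minus_def)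
    qed
    have "\<forall>i<r. (\<Oplus>j\<in>J. \<one> \<otimes> w j i) \<in> M"
    proof (intro allI impI)
      fix i assume i: "i < r"
      show "(\<Oplus>j\<in>J. \<one> \<otimes> w j i) \<in> M"
      proof (rule M_finsum[OF J(1)])
        fix j assume "j \<in> J"
        then have "w j i \<in> M" using wM i by blast
        then show "\<one> \<otimes> w j i \<in> M" using M_carr by simp
      qed
    qed
    moreover have "(\<forall>j\<in>J. \<one> \<in> carrier R) \<and> (\<forall>i<r. (\<Oplus>j\<in>J. \<one> \<otimes> w j i) \<in> M) \<longrightarrow> (\<forall>j\<in>J. \<one> \<in> M)"
      using J(3) unfolding indepS_def by (rule allE[where x="\<lambda>_. \<one>"])
    ultimately have "\<one> \<in> M" using j0 by blast
    then show False using one_notin by blast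
  qed
next
  case (insert l0 L)
  fix J w assume J: "finite J" "\<forall>j\<in>J. vecs R r (w j)" "\<forall>l\<in>insert l0 L. vecs R r (g l)"
     "indepS R M r w J" "\<forall>j\<in>J. spanS R M r (insert l0 L) g (w j)"
  have wc: "\<And>j i. j \<in> J \<Longrightarrow> i < r \<Longrightarrow> w j i \<in> carrier R" using J(2) unfolding vecs_def by blast
  have gc: "\<And>l i. l \<in> insert l0 L \<Longrightarrow> i < r \<Longrightarrow> g l i \<in> carrier R" using J(3) unfolding vecs_def by blast
  have gL: "\<forall>l\<in>L. vecs R r (g l)" using J(3) by blast
  obtain \<beta> where \<beta>: "\<And>j l. j \<in> J \<Longrightarrow> l \<in> insert l0 L \<Longrightarrow> \<beta> j l \<in> carrier R"
    "\<And>j i. j \<in> J \<Longrightarrow> i < r \<Longrightarrow> w j i \<ominus> (\<Oplus>l\<in>insert l0 L. \<beta> j l \<otimes> g l i) \<in> M"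
  proof -
    have "\<forall>j\<in>J. \<exists>\<beta>. (\<forall>l\<in>insert l0 L. \<beta> l \<in> carrier R) \<and>
      (\<forall>i<r. w j i \<ominus> (\<Oplus>l\<in>insert l0 L. \<beta> l \<otimes> g l i) \<in> M)"
      using J(5) unfolding spanS_def by blast
    then have "\<exists>\<beta>. \<forall>j\<in>J. (\<forall>l\<in>insert l0 L. \<beta> j l \<in> carrier R) \<and>
      (\<forall>i<r. w j i \<ominus> (\<Oplus>l\<in>insert l0 L. \<beta> j l \<otimes> g l i) \<in> M)"
      by (rule bchoice)
    then obtain \<beta> where b: "\<forall>j\<in>J. (\<forall>l\<in>insert l0 L. \<beta> j l \<in> carrier R) \<and>
      (\<forall>i<r. w j i \<ominus> (\<Oplus>l\<in>insert l0 L. \<beta> j l \<otimes> g l i) \<in> M)" by blast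
    show ?thesis by (rule that[of \<beta>]) (use b in auto)
  qed
  define P where "P j i = (\<Oplus>l\<in>L. \<beta> j l \<otimes> g l i)" for j i
  have Pc: "\<And>j i. j \<in> J \<Longrightarrow> i < r \<Longrightarrow> P j i \<in> carrier R"
    unfolding P_def using \<beta>(1) gc by (auto intro!: finsum_closed)
  have split: "(\<Oplus>l\<in>insert l0 L. \<beta> j l \<otimes> g l i) = \<beta> j l0 \<otimes> g l0 i \<oplus> P j i"
    if "j \<in> J" "i < r" for j i
    unfolding P_def using insert.hyps \<beta>(1) gc that by (subst finsum_insert) (auto simp: Pi_def)
  have E: "\<And>j i. j \<in> J \<Longrightarrow> i < r \<Longrightarrow> w j i \<ominus> (\<beta> j l0 \<otimes> g l0 i \<oplus> P j i) \<in> M"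
  proof -
    fix j i assume "j \<in> J" "i < r"
    then show "w j i \<ominus> (\<beta> j l0 \<otimes> g l0 i \<oplus> P j i) \<in> M" using \<beta>(2)[of j i] split[of j i] by simp
  qed
  show "card J \<le> card (insert l0 L)"
  proof (cases "\<forall>j\<in>J. \<beta> j l0 \<in> M")
    case True
    have "\<forall>j\<in>J. spanS R M r L g (w j)"
      unfolding spanS_def
    proof (intro ballI exI[of _ "\<beta> _"] conjI allI impI)
      fix j i assume j: "j \<in> J" and i: "i < r"
      show "w j i \<ominus> (\<Oplus>l\<in>L. \<beta> j l \<otimes> g l i) \<in> M"
        using alg2[OF wc[OF j i] Pc[OF j i] \<beta>(1)[OF j, of l0] gc[of l0 i]] i
          M_add[OF E[OF j i] M_mult2[OF True[rule_format, OF j] gc[of l0 i]]]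
        unfolding P_def by simp
    next
      fix j l assume "j \<in> J" "l \<in> L" then show "\<beta> j l \<in> carrier R" using \<beta>(1) by blast
    qed
    then have "card J \<le> card L" using insert.IH[OF J(1,2) gL J(4)] by blast
    then show ?thesis using insert.hyps by simp
  next
    case False
    then obtain j0 where j0: "j0 \<in> J" "\<beta> j0 l0 \<notin> M" by blast
    define b0 where "b0 = \<beta> j0 l0"
    define t where "t = inv b0"
    have b0c: "b0 \<in> carrier R" unfolding b0_def using \<beta>(1) j0 by blast
    have tc: "t \<in> carrier R" and tb0: "t \<otimes> b0 = \<one>"
      unfolding t_def using inv_c inv_l b0c j0 b0_def by auto
    define J' where "J' = J - {j0}"
    have J'f: "finite J'" and J'J: "J' \<subseteq> J" and JJ': "J = insert j0 J'" and j0J': "j0 \<notin> J'"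
      unfolding J'_def using J(1) j0 by auto
    define s where "s j = \<beta> j l0 \<otimes> t" for j
    have sc: "\<And>j. j \<in> J \<Longrightarrow> s j \<in> carrier R" unfolding s_def using \<beta>(1) tc by blast
    have sb0: "\<And>j. j \<in> J \<Longrightarrow> s j \<otimes> b0 = \<beta> j l0"
      unfolding s_def using \<beta>(1) tc b0c tb0 by (simp add: m_assoc)
    define w' where "w' j i = w j i \<ominus> s j \<otimes> w j0 i" for j i
    have w'c: "\<And>j i. j \<in> J' \<Longrightarrow> i < r \<Longrightarrow> w' j i \<in> carrier R"
      unfolding w'_def using J'J wc sc j0 by blast
    have w'v: "\<forall>j\<in>J'. vecs R r (w' j)" unfolding vecs_def using w'c by blast
    have w'span: "\<forall>j\<in>J'. spanS R M r L g (w' j)"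
      unfolding spanS_def
    proof (intro ballI exI[of _ "\<lambda>l. \<beta> _ l \<ominus> s _ \<otimes> \<beta> j0 l"] conjI allI impI)
      fix j l assume j: "j \<in> J'" and l: "l \<in> L"
      show "\<beta> j l \<ominus> s j \<otimes> \<beta> j0 l \<in> carrier R" using j l J'J \<beta>(1) sc j0 by blast
    next
      fix j i assume j: "j \<in> J'" and i: "i < r"
      have jJ: "j \<in> J" using j J'J by blast
      have "(\<Oplus>l\<in>L. (\<beta> j l \<ominus> s j \<otimes> \<beta> j0 l) \<otimes> g l i)
          = (\<Oplus>l\<in>L. \<beta> j l \<otimes> g l i \<ominus> s j \<otimes> (\<beta> j0 l \<otimes> g l i))"
        using \<beta>(1) jJ j0 sc gc i by (intro finsum_cong') (auto simp: Pi_def alg5)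
      also have "\<dots> = P j i \<ominus> (\<Oplus>l\<in>L. s j \<otimes> (\<beta> j0 l \<otimes> g l i))"
        unfolding P_def using \<beta>(1) jJ j0 sc gc i insert.hyps by (subst fs_minus) (auto simp: Pi_def)
      also have "(\<Oplus>l\<in>L. s j \<otimes> (\<beta> j0 l \<otimes> g l i)) = s j \<otimes> P j0 i"
        unfolding P_def using \<beta>(1) jJ j0 sc gc i insert.hyps by (subst finsum_rdistr) (auto simp: Pi_def)
      finally have e: "(\<Oplus>l\<in>L. (\<beta> j l \<ominus> s j \<otimes> \<beta> j0 l) \<otimes> g l i) = P j i \<ominus> s j \<otimes> P j0 i" .
      have "w' j i \<ominus> (P j i \<ominus> s j \<otimes> P j0 i) =
         (w j i \<ominus> (\<beta> j l0 \<otimes> g l0 i \<oplus> P j i)) \<ominus> s j \<otimes> (w j0 i \<ominus> (b0 \<otimes> g l0 i \<oplus> P j0 i))"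
        unfolding w'_def sb0[OF jJ, symmetric]
        by (rule alg3) (use wc jJ j0 i Pc sc b0c gc in auto)
      also have "\<dots> \<in> M" using M_minus[OF E[OF jJ i] M_mult[OF E[OF j0(1) i] sc[OF jJ]]] b0_def by simp
      finally show "w' j i \<ominus> (\<Oplus>l\<in>L. (\<beta> j l \<ominus> s j \<otimes> \<beta> j0 l) \<otimes> g l i) \<in> M" unfolding e .
    qed
    have w'ind: "indepS R M r w' J'"
      unfolding indepS_def
    proof (intro allI impI)
      fix c assume c: "(\<forall>j\<in>J'. c j \<in> carrier R) \<and> (\<forall>i<r. (\<Oplus>j\<in>J'. c j \<otimes> w' j i) \<in> M)"
      have cc: "\<And>j. j \<in> J' \<Longrightarrow> c j \<in> carrier R" using c by blast
      define K where "K = (\<Oplus>j\<in>J'. c j \<otimes> s j)"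
      have Kc: "K \<in> carrier R" unfolding K_def using cc sc J'J by (auto intro!: finsum_closed)
      define c2 where "c2 j = (if j = j0 then \<ominus> K else c j)" for j
      have c2c: "\<forall>j\<in>J. c2 j \<in> carrier R" unfolding c2_def using cc Kc JJ' by auto
      have "\<forall>i<r. (\<Oplus>j\<in>J. c2 j \<otimes> w j i) \<in> M"
      proof (intro allI impI)
        fix i assume i: "i < r"
        have "(\<Oplus>j\<in>J. c2 j \<otimes> w j i) = (\<ominus> K) \<otimes> w j0 i \<oplus> (\<Oplus>j\<in>J'. c j \<otimes> w j i)"
        proof -
          have "(\<Oplus>j\<in>J. c2 j \<otimes> w j i) = c2 j0 \<otimes> w j0 i \<oplus> (\<Oplus>j\<in>J'. c2 j \<otimes> w j i)"
            unfolding JJ' using J'f j0J' c2c wc i JJ' by (subst finsum_insert) (auto simp: Pi_def)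
          also have "(\<Oplus>j\<in>J'. c2 j \<otimes> w j i) = (\<Oplus>j\<in>J'. c j \<otimes> w j i)"
            unfolding c2_def using j0J' cc wc i J'J by (intro finsum_cong') (auto simp: Pi_def)
          finally show ?thesis unfolding c2_def by simp
        qed
        also have "\<dots> = (\<Oplus>j\<in>J'. c j \<otimes> w j i) \<ominus> K \<otimes> w j0 i"
          by (rule alg4) (use wc j0 i Kc cc J'J J'f in \<open>auto intro!: finsum_closed\<close>)
        also have "\<dots> = (\<Oplus>j\<in>J'. c j \<otimes> w' j i)"
        proof -
          have "(\<Oplus>j\<in>J'. c j \<otimes> w' j i) = (\<Oplus>j\<in>J'. c j \<otimes> w j i \<ominus> (c j \<otimes> s j) \<otimes> w j0 i)"
            unfolding w'_def using cc wc sc i J'J j0 by (intro finsum_cong') (auto simp: Pi_def alg6)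
          also have "\<dots> = (\<Oplus>j\<in>J'. c j \<otimes> w j i) \<ominus> (\<Oplus>j\<in>J'. (c j \<otimes> s j) \<otimes> w j0 i)"
            using cc wc sc i J'J j0 J'f by (subst fs_minus) (auto simp: Pi_def)
          also have "(\<Oplus>j\<in>J'. (c j \<otimes> s j) \<otimes> w j0 i) = K \<otimes> w j0 i"
            unfolding K_def using cc wc sc i J'J j0 J'f by (subst finsum_ldistr) (auto simp: Pi_def)
          finally show ?thesis by simp
        qed
        finally show "(\<Oplus>j\<in>J. c2 j \<otimes> w j i) \<in> M" using c i by simp
      qed
      then have "\<forall>j\<in>J. c2 j \<in> M" using J(4) c2c unfolding indepS_def by blast
      then show "\<forall>j\<in>J'. c j \<in> M"
      proof (intro ballI)
        fix j assume "\<forall>j\<in>J. c2 j \<in> M" and j: "j \<in> J'"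
        then have "c2 j \<in> M" using J'J by blast
        moreover have "j \<noteq> j0" using j j0J' by blast
        ultimately show "c j \<in> M" unfolding c2_def by simp
      qed
    qed
    have "card J' \<le> card L" using insert.IH J'f w'v gL w'ind w'span by blast
    moreover have "card J = Suc (card J')" using JJ' J'f j0J' by simp
    ultimately show ?thesis using insert.hyps by simp
  qed
qed

end


definition ev :: "('a, 'c) ring_scheme \<Rightarrow> nat \<Rightarrow> nat \<Rightarrow> 'a" where
  "ev R l i = (if l = i then \<one>\<^bsub>R\<^esub> else \<zero>\<^bsub>R\<^esub>)"

context lring
begin

lemma ev_vecs: "vecs R r (ev R l)" unfolding vecs_def ev_def by simp

lemma ev_span: assumes "vecs R r a" shows "spanS R M r {..<r} (ev R) a"
  unfolding spanS_def
proof (intro exI[of _ a] conjI ballI allI impI)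
  show "a l \<in> carrier R" if "l \<in> {..<r}" for l using assms that unfolding vecs_def by auto
  fix i assume i: "i < r"
  have "(\<Oplus>l\<in>{..<r}. a l \<otimes> ev R l i) = a i"
    unfolding ev_def using fs_delta[of i "{..<r}" a] assms i unfolding vecs_def by (auto simp: Pi_def)
  then show "a i \<ominus> (\<Oplus>l\<in>{..<r}. a l \<otimes> ev R l i) \<in> M"
    using assms i M_zero unfolding vecs_def by (simp add: r_neg a_minus_def)
qed

lemma ev_indep: assumes "k \<le> r" shows "indepS R M r (ev R) {..<k}"
  unfolding indepS_def
proof (intro allI impI ballI)
  fix c j assume c: "(\<forall>j\<in>{..<k}. c j \<in> carrier R) \<and> (\<forall>i<r. (\<Oplus>j\<in>{..<k}. c j \<otimes> ev R j i) \<in> M)"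
    and j: "j \<in> {..<k}"
  have "(\<Oplus>l\<in>{..<k}. c l \<otimes> ev R l j) = c j"
    unfolding ev_def using fs_delta[of j "{..<k}" c] c j by (auto simp: Pi_def)
  moreover have "j < r" using j assms by auto
  ultimately show "c j \<in> M" using c by metis
qed

lemma indep_le_r:
  assumes "finite J" "\<forall>j\<in>J. vecs R r (w j)" "indepS R M r w J"
  shows "card J \<le> r"
proof -
  have "card J \<le> card {..<r}"
    by (rule steinitz[where L="{..<r}" and J=J and w=w and g="ev R"]) (use assms ev_vecs ev_span in auto)
  then show ?thesis by simp
qed

lemma dim_bound:
  assumes P: "P \<subseteq> {a. vecs R r a}"
  shows "\<forall>k. (\<exists>u. (\<forall>j<k. u j \<in> P) \<and> indep_mod R M r u k) \<longrightarrow> k \<le> r"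
proof (intro allI impI)
  fix k assume "\<exists>u. (\<forall>j<k. u j \<in> P) \<and> indep_mod R M r u k"
  then obtain u where u: "\<forall>j<k. u j \<in> P" "indep_mod R M r u k" by blast
  have "card {..<k} \<le> r" using indep_le_r[of "{..<k}" r u] u P unfolding indep_mod_eq by auto
  then show "k \<le> r" by simp
qed

lemma dim_ex:
  assumes P: "P \<subseteq> {a. vecs R r a}"
  shows "\<exists>u. (\<forall>j<dimS R M r P. u j \<in> P) \<and> indep_mod R M r u (dimS R M r P)"
proof -
  have z: "\<exists>u. (\<forall>j<0. u j \<in> P) \<and> indep_mod R M r u 0" unfolding indep_mod_def by simp
  show ?thesis unfolding dimS_def
    by (rule GreatestI_nat[where P="\<lambda>k. \<exists>u. (\<forall>j<k. u j \<in> P) \<and> indep_mod R M r u k" and k=0, OF z])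
       (use dim_bound[OF P] in blast)
qed

lemma dim_ge:
  assumes P: "P \<subseteq> {a. vecs R r a}" and u: "\<forall>j<k. u j \<in> P" "indep_mod R M r u k"
  shows "k \<le> dimS R M r P"
  unfolding dimS_def
  by (rule Greatest_le_nat[where P="\<lambda>k. \<exists>u. (\<forall>j<k. u j \<in> P) \<and> indep_mod R M r u k" and k=k and b=r])
     (use u dim_bound[OF P] in blast)+

lemma dim_le_r:
  assumes P: "P \<subseteq> {a. vecs R r a}"
  shows "dimS R M r P \<le> r"
  using dim_ex[OF P] dim_bound[OF P] by blast

lemma dim_span:
  assumes P: "P \<subseteq> {a. vecs R r a}" and u: "\<forall>j<dimS R M r P. u j \<in> P" "indep_mod R M r u (dimS R M r P)"
    and a: "a \<in> P"
  shows "spanS R M r {..<dimS R M r P} u a"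
proof (rule ccontr)
  define d where "d = dimS R M r P"
  assume ns: "\<not> spanS R M r {..<dimS R M r P} u a"
  have "indepS R M r (u(d:=a)) (insert d {..<d})"
    by (rule add_indep) (use ns u a P in \<open>auto simp: d_def indep_mod_eq\<close>)
  then have "indep_mod R M r (u(d:=a)) (Suc d)" unfolding indep_mod_eq lessThan_Suc .
  moreover have "\<forall>j<Suc d. (u(d:=a)) j \<in> P" using u a unfolding d_def by auto
  ultimately have "Suc d \<le> d" using dim_ge[OF P] unfolding d_def by blast
  then show False by simp
qed

lemma dim_le_span:
  assumes P: "P \<subseteq> {a. vecs R r a}" and L: "finite L" "\<forall>l\<in>L. vecs R r (g l)"
    and sp: "\<forall>a\<in>P. spanS R M r L g a"
  shows "dimS R M r P \<le> card L"
proof -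
  obtain u where u: "\<forall>j<dimS R M r P. u j \<in> P" "indep_mod R M r u (dimS R M r P)"
    using dim_ex[OF P] by blast
  have "card {..<dimS R M r P} \<le> card L"
    by (rule steinitz[OF L(1)]) (use u P L sp in \<open>auto simp: indep_mod_eq\<close>)
  then show ?thesis by simp
qed

lemma full_span:
  assumes u: "\<forall>j<r. vecs R r (u j)" "indep_mod R M r u r" and a: "vecs R r a"
  shows "spanS R M r {..<r} u a"
proof (rule ccontr)
  assume ns: "\<not> spanS R M r {..<r} u a"
  have "indepS R M r (u(r:=a)) (insert r {..<r})"
    by (rule add_indep) (use ns u a in \<open>auto simp: indep_mod_eq\<close>)
  then have "card (insert r {..<r}) \<le> r"
    by (intro indep_le_r) (use u a in auto)
  then show False by simp
qed

lemma extend_indep: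
  assumes u: "\<forall>j<d. vecs R r (u j)" "indep_mod R M r u d" and dk: "d \<le> k" and kr: "k \<le> r"
  shows "\<exists>u'. (\<forall>j<d. u' j = u j) \<and> (\<forall>j<k. vecs R r (u' j)) \<and> indep_mod R M r u' k"
  using dk kr
proof (induction k rule: dec_induct)
  case base then show ?case using u by blast
next
  case (step n)
  then obtain u' where u': "\<forall>j<d. u' j = u j" "\<forall>j<n. vecs R r (u' j)" "indep_mod R M r u' n" by auto
  have "\<exists>l<r. \<not> spanS R M r {..<n} u' (ev R l)"
  proof (rule ccontr)
    assume "\<not> (\<exists>l<r. \<not> spanS R M r {..<n} u' (ev R l))"
    then have "\<forall>l\<in>{..<r}. spanS R M r {..<n} u' (ev R l)" by auto
    then have "card {..<r} \<le> card {..<n}"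
      by (intro steinitz[where L="{..<n}" and J="{..<r}" and w="ev R" and g=u']) (use u' ev_vecs ev_indep in \<open>auto simp: indep_mod_eq\<close>)
    then show False using step by simp
  qed
  then obtain l where l: "l < r" "\<not> spanS R M r {..<n} u' (ev R l)" by blast
  have "indepS R M r (u'(n:=ev R l)) (insert n {..<n})"
    by (rule add_indep) (use l u' ev_vecs in \<open>auto simp: indep_mod_eq\<close>)
  then have "indep_mod R M r (u'(n:=ev R l)) (Suc n)" unfolding indep_mod_eq lessThan_Suc .
  moreover have "\<forall>j<d. (u'(n:=ev R l)) j = u j" using u' step by auto
  moreover have "\<forall>j<Suc n. vecs R r ((u'(n:=ev R l)) j)" using u' ev_vecs by auto
  ultimately show ?case by blast
qed

end


lemma nth_carr[simp]: "set ys \<subseteq> S \<Longrightarrow> i < length ys \<Longrightarrow> ys ! i \<in> S"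
  by (meson nth_mem subsetD)

context cring
begin

lemma rdiff: "x \<in> carrier R \<Longrightarrow> a \<in> carrier R \<Longrightarrow> b \<in> carrier R \<Longrightarrow> x \<otimes> (a \<ominus> b) = x \<otimes> a \<ominus> x \<otimes> b"
  by algebra

lemma ideal_finsum:
  assumes I: "ideal I R"
  shows "finite A \<Longrightarrow> (\<And>i. i \<in> A \<Longrightarrow> f i \<in> I) \<Longrightarrow> (\<Oplus>i\<in>A. f i) \<in> I"
proof (induction A rule: finite_induct)
  case empty then show ?case using ideal_zero[OF I] by simp
next
  case (insert a A)
  have fc: "f \<in> A \<rightarrow> carrier R" "f a \<in> carrier R" using insert ideal.Icarr[OF I] by (auto simp: Pi_def)
  have "(\<Oplus>i\<in>insert a A. f i) = f a \<oplus> (\<Oplus>i\<in>A. f i)"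
    using insert.hyps fc by (subst finsum_insert) auto
  then show ?case using ideal_add[OF I] insert by simp
qed

lemma fs_Suc0: "f \<in> {..<Suc n} \<rightarrow> carrier R \<Longrightarrow> (\<Oplus>t\<in>{..<Suc n}. f t) = f 0 \<oplus> (\<Oplus>t\<in>{..<n}. f (Suc t))"
proof -
  assume f: "f \<in> {..<Suc n} \<rightarrow> carrier R"
  have "(\<Oplus>t\<in>{..<Suc n}. f t) = (\<Oplus>t\<in>insert 0 (Suc ` {..<n}). f t)" by (simp add: lessThan_Suc_eq_insert_0)
  also have "\<dots> = f 0 \<oplus> (\<Oplus>t\<in>Suc ` {..<n}. f t)"
    using f by (subst finsum_insert) (auto simp: Pi_def)
  also have "(\<Oplus>t\<in>Suc ` {..<n}. f t) = (\<Oplus>t\<in>{..<n}. f (Suc t))"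
    using f by (subst finsum_reindex) (auto simp: Pi_def)
  finally show ?thesis .
qed

definition lc :: "'a list \<Rightarrow> (nat \<Rightarrow> 'a) \<Rightarrow> 'a" where
  "lc ys e = (\<Oplus>i\<in>{..<length ys}. ys ! i \<otimes> e i)"

lemma lc_closed: "set ys \<subseteq> carrier R \<Longrightarrow> (\<And>i. i < length ys \<Longrightarrow> e i \<in> carrier R) \<Longrightarrow> lc ys e \<in> carrier R"
  unfolding lc_def by (auto intro!: finsum_closed)

lemma lc_in_ideal: "ideal I R \<Longrightarrow> set ys \<subseteq> I \<Longrightarrow> (\<And>i. i < length ys \<Longrightarrow> e i \<in> carrier R) \<Longrightarrow> lc ys e \<in> I"
  unfolding lc_def by (rule ideal_finsum) (auto intro: ideal.I_r_closed)

lemma lc_in_ideal2: "ideal I R \<Longrightarrow> set ys \<subseteq> carrier R \<Longrightarrow> (\<And>i. i < length ys \<Longrightarrow> e i \<in> I) \<Longrightarrow> lc ys e \<in> I"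
  unfolding lc_def by (rule ideal_finsum) (auto intro: ideal.I_l_closed)

lemma lc_add: "set ys \<subseteq> carrier R \<Longrightarrow> (\<And>i. i < length ys \<Longrightarrow> e i \<in> carrier R) \<Longrightarrow>
   (\<And>i. i < length ys \<Longrightarrow> e' i \<in> carrier R) \<Longrightarrow> lc ys e \<oplus> lc ys e' = lc ys (\<lambda>i. e i \<oplus> e' i)"
proof -
  assume a: "set ys \<subseteq> carrier R" "\<And>i. i < length ys \<Longrightarrow> e i \<in> carrier R" "\<And>i. i < length ys \<Longrightarrow> e' i \<in> carrier R"
  have "lc ys e \<oplus> lc ys e' = (\<Oplus>i\<in>{..<length ys}. ys ! i \<otimes> e i \<oplus> ys ! i \<otimes> e' i)"
    unfolding lc_def using a by (subst finsum_addf) (auto simp: Pi_def)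
  also have "\<dots> = lc ys (\<lambda>i. e i \<oplus> e' i)"
    unfolding lc_def using a by (intro finsum_cong') (auto simp: Pi_def r_distr)
  finally show ?thesis .
qed

lemma lc_minus: "set ys \<subseteq> carrier R \<Longrightarrow> (\<And>i. i < length ys \<Longrightarrow> e i \<in> carrier R) \<Longrightarrow>
   (\<And>i. i < length ys \<Longrightarrow> e' i \<in> carrier R) \<Longrightarrow> lc ys e \<ominus> lc ys e' = lc ys (\<lambda>i. e i \<ominus> e' i)"
proof -
  assume a: "set ys \<subseteq> carrier R" "\<And>i. i < length ys \<Longrightarrow> e i \<in> carrier R" "\<And>i. i < length ys \<Longrightarrow> e' i \<in> carrier R"
  have "lc ys e \<ominus> lc ys e' = (\<Oplus>i\<in>{..<length ys}. ys ! i \<otimes> e i \<ominus> ys ! i \<otimes> e' i)"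
    unfolding lc_def using a by (subst fs_minus) (auto simp: Pi_def)
  also have "\<dots> = lc ys (\<lambda>i. e i \<ominus> e' i)"
    unfolding lc_def using a by (intro finsum_cong') (auto simp: Pi_def rdiff)
  finally show ?thesis .
qed

lemma lc_smult: "set ys \<subseteq> carrier R \<Longrightarrow> (\<And>i. i < length ys \<Longrightarrow> e i \<in> carrier R) \<Longrightarrow> x \<in> carrier R \<Longrightarrow>
   x \<otimes> lc ys e = lc ys (\<lambda>i. x \<otimes> e i)"
proof -
  assume a: "set ys \<subseteq> carrier R" "\<And>i. i < length ys \<Longrightarrow> e i \<in> carrier R" "x \<in> carrier R"
  have "x \<otimes> lc ys e = (\<Oplus>i\<in>{..<length ys}. x \<otimes> (ys ! i \<otimes> e i))"
    unfolding lc_def using a by (subst finsum_rdistr) (auto simp: Pi_def)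
  also have "\<dots> = lc ys (\<lambda>i. x \<otimes> e i)"
    unfolding lc_def using a by (intro finsum_cong') (auto simp: Pi_def m_lcomm)
  finally show ?thesis .
qed

lemma lc_cong: "set ys \<subseteq> carrier R \<Longrightarrow> (\<And>i. i < length ys \<Longrightarrow> e' i \<in> carrier R) \<Longrightarrow>
  (\<And>i. i < length ys \<Longrightarrow> e i = e' i) \<Longrightarrow> lc ys e = lc ys e'"
  unfolding lc_def by (intro finsum_cong) (auto simp: Pi_def)

lemma lc_delta: "set ys \<subseteq> carrier R \<Longrightarrow> k < length ys \<Longrightarrow> lc ys (\<lambda>i. if i = k then \<one> else \<zero>) = ys ! k"
  unfolding lc_def by (rule fs_delta) (auto simp: Pi_def)

lemma genideal_lc:
  assumes ys: "set ys \<subseteq> carrier R"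
  shows "Idl (set ys) = {x. \<exists>e. (\<forall>i<length ys. e i \<in> carrier R) \<and> x = lc ys e}"
proof
  define T where "T = {x. \<exists>e. (\<forall>i<length ys. e i \<in> carrier R) \<and> x = lc ys e}"
  have "ideal T R"
  proof (rule ideal_crit)
    show "T \<subseteq> carrier R" unfolding T_def using lc_closed ys by blast
    have "lc ys (\<lambda>_. \<zero>) = (\<Oplus>i\<in>{..<length ys}. \<zero>)" unfolding lc_def using ys by (intro finsum_cong') auto
    then have "lc ys (\<lambda>_. \<zero>) = \<zero>" by simp
    then show "\<zero> \<in> T" unfolding T_def by (intro CollectI exI[of _ "\<lambda>_. \<zero>"]) auto
    show "a \<oplus> b \<in> T" if "a \<in> T" "b \<in> T" for a b
      using that lc_add[OF ys] unfolding T_def by (smt (verit, best) add.m_closed mem_Collect_eq)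
    show "x \<otimes> a \<in> T" if "a \<in> T" "x \<in> carrier R" for a x
      using that lc_smult[OF ys] unfolding T_def by (smt (verit, best) m_closed mem_Collect_eq)
  qed
  moreover have "set ys \<subseteq> T"
  proof
    fix y assume "y \<in> set ys"
    then obtain k where k: "k < length ys" "y = ys ! k" by (auto simp: in_set_conv_nth)
    then show "y \<in> T" unfolding T_def using lc_delta[OF ys k(1)]
      by (intro CollectI exI[of _ "\<lambda>i. if i = k then \<one> else \<zero>"]) auto
  qed
  ultimately show "Idl (set ys) \<subseteq> T" unfolding T_def using genideal_minimal by blast
next
  show "{x. \<exists>e. (\<forall>i<length ys. e i \<in> carrier R) \<and> x = lc ys e} \<subseteq> Idl (set ys)"
    using lc_in_ideal[OF genideal_ideal[OF ys] genideal_self[OF ys]] by blast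
qed

end


context cring
begin

lemma alg7: "y \<in> carrier R \<Longrightarrow> e \<in> carrier R \<Longrightarrow> S \<in> carrier R \<Longrightarrow> t \<in> carrier R \<Longrightarrow>
  y \<otimes> e \<oplus> S = \<zero> \<Longrightarrow> t \<otimes> e = \<one> \<Longrightarrow> y = (\<ominus> t) \<otimes> S"
proof -
  assume c: "y \<in> carrier R" "e \<in> carrier R" "S \<in> carrier R" "t \<in> carrier R" and z: "y \<otimes> e \<oplus> S = \<zero>" and te: "t \<otimes> e = \<one>"
  have "y \<otimes> e = (y \<otimes> e \<oplus> S) \<ominus> S" using c by algebra
  then have ye: "y \<otimes> e = \<ominus> S" using z c by (simp add: a_minus_def)
  have "y = (t \<otimes> e) \<otimes> y" using te c by simp
  also have "\<dots> = t \<otimes> (y \<otimes> e)" using c by algebra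
  also have "\<dots> = t \<otimes> (\<ominus> S)" using ye by simp
  also have "\<dots> = (\<ominus> t) \<otimes> S" using c by algebra
  finally show ?thesis .
qed

lemma alg8: "y \<in> carrier R \<Longrightarrow> e \<in> carrier R \<Longrightarrow> a \<in> carrier R \<Longrightarrow> L \<in> carrier R \<Longrightarrow> v \<in> carrier R \<Longrightarrow>
  y = a \<oplus> (y \<otimes> e \<oplus> L) \<Longrightarrow> v \<otimes> (\<one> \<ominus> e) = \<one> \<Longrightarrow> y = v \<otimes> a \<oplus> v \<otimes> L"
proof -
  assume c: "y \<in> carrier R" "e \<in> carrier R" "a \<in> carrier R" "L \<in> carrier R" "v \<in> carrier R"
    and h: "y = a \<oplus> (y \<otimes> e \<oplus> L)" and v: "v \<otimes> (\<one> \<ominus> e) = \<one>"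
  have "y \<otimes> (\<one> \<ominus> e) = y \<ominus> y \<otimes> e" using c by algebra
  also have "\<dots> = (a \<oplus> (y \<otimes> e \<oplus> L)) \<ominus> y \<otimes> e" using h by simp
  also have "\<dots> = a \<oplus> L" using c by algebra
  finally have e1: "y \<otimes> (\<one> \<ominus> e) = a \<oplus> L" .
  have "y = (v \<otimes> (\<one> \<ominus> e)) \<otimes> y" using v c by simp
  also have "\<dots> = v \<otimes> (y \<otimes> (\<one> \<ominus> e))" using c by algebra
  also have "\<dots> = v \<otimes> a \<oplus> v \<otimes> L" unfolding e1 using c by algebra
  finally show ?thesis .
qed

lemma alg9: "b \<in> carrier R \<Longrightarrow> a \<in> carrier R \<Longrightarrow> L1 \<in> carrier R \<Longrightarrow> L2 \<in> carrier R \<Longrightarrow> h \<in> carrier R \<Longrightarrow>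
  b \<oplus> ((a \<oplus> L1) \<otimes> h \<oplus> L2) = (b \<oplus> a \<otimes> h) \<oplus> (h \<otimes> L1 \<oplus> L2)"
  by algebra

end

context lring
begin

lemma span_remove:
  assumes L: "finite L" "l0 \<notin> L" and gv: "\<forall>l\<in>insert l0 L. vecs R r (g l)" and av: "vecs R r a"
    and s1: "spanS R M r (insert l0 L) g a" and s2: "spanS R M r L g (g l0)"
  shows "spanS R M r L g a"
proof -
  obtain \<beta> where \<beta>: "\<forall>l\<in>insert l0 L. \<beta> l \<in> carrier R" "\<forall>i<r. a i \<ominus> (\<Oplus>l\<in>insert l0 L. \<beta> l \<otimes> g l i) \<in> M"
    using s1 unfolding spanS_def by blast
  obtain \<mu> where \<mu>: "\<forall>l\<in>L. \<mu> l \<in> carrier R" "\<forall>i<r. g l0 i \<ominus> (\<Oplus>l\<in>L. \<mu> l \<otimes> g l i) \<in> M"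
    using s2 unfolding spanS_def by blast
  have gc: "\<And>l i. l \<in> insert l0 L \<Longrightarrow> i < r \<Longrightarrow> g l i \<in> carrier R" using gv unfolding vecs_def by blast
  have ac: "\<And>i. i < r \<Longrightarrow> a i \<in> carrier R" using av unfolding vecs_def by blast
  have b0: "\<beta> l0 \<in> carrier R" using \<beta> by blast
  show ?thesis
    unfolding spanS_def
  proof (intro exI[of _ "\<lambda>l. \<beta> l \<oplus> \<beta> l0 \<otimes> \<mu> l"] conjI ballI allI impI)
    show "\<beta> l \<oplus> \<beta> l0 \<otimes> \<mu> l \<in> carrier R" if "l \<in> L" for l using that \<beta> \<mu> by blast
    fix i assume i: "i < r"
    define P where "P = (\<Oplus>l\<in>L. \<beta> l \<otimes> g l i)"
    define Q where "Q = (\<Oplus>l\<in>L. \<mu> l \<otimes> g l i)"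
    have Pc: "P \<in> carrier R" unfolding P_def using \<beta> gc i by (auto intro!: finsum_closed)
    have Qc: "Q \<in> carrier R" unfolding Q_def using \<mu> gc i by (auto intro!: finsum_closed)
    have e1: "(\<Oplus>l\<in>insert l0 L. \<beta> l \<otimes> g l i) = \<beta> l0 \<otimes> g l0 i \<oplus> P"
      unfolding P_def using L \<beta> gc i by (subst finsum_insert) (auto simp: Pi_def)
    have "(\<Oplus>l\<in>L. (\<beta> l \<oplus> \<beta> l0 \<otimes> \<mu> l) \<otimes> g l i) = (\<Oplus>l\<in>L. \<beta> l \<otimes> g l i \<oplus> \<beta> l0 \<otimes> (\<mu> l \<otimes> g l i))"
      using \<beta> \<mu> gc i by (intro finsum_cong') (auto simp: Pi_def l_distr m_assoc)
    also have "\<dots> = P \<oplus> (\<Oplus>l\<in>L. \<beta> l0 \<otimes> (\<mu> l \<otimes> g l i))"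
      unfolding P_def using \<beta> \<mu> gc i by (subst finsum_addf) (auto simp: Pi_def)
    also have "(\<Oplus>l\<in>L. \<beta> l0 \<otimes> (\<mu> l \<otimes> g l i)) = \<beta> l0 \<otimes> Q"
      unfolding Q_def using \<beta> \<mu> gc i L by (subst finsum_rdistr) (auto simp: Pi_def)
    finally have e2: "(\<Oplus>l\<in>L. (\<beta> l \<oplus> \<beta> l0 \<otimes> \<mu> l) \<otimes> g l i) = P \<oplus> \<beta> l0 \<otimes> Q" .
    have "a i \<ominus> (P \<oplus> \<beta> l0 \<otimes> Q) = (a i \<ominus> (\<beta> l0 \<otimes> g l0 i \<oplus> P)) \<oplus> \<beta> l0 \<otimes> (g l0 i \<ominus> Q)"
      using ac[OF i] Pc Qc b0 gc[OF insertI1 i] by algebra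
    also have "\<dots> \<in> M"
      using M_add[OF \<beta>(2)[rule_format, OF i, unfolded e1] M_mult[OF \<mu>(2)[rule_format, OF i, folded Q_def] b0]] .
    finally show "a i \<ominus> (\<Oplus>l\<in>L. (\<beta> l \<oplus> \<beta> l0 \<otimes> \<mu> l) \<otimes> g l i) \<in> M" unfolding e2 .
  qed
qed

lemma dep_one:
  assumes L: "finite L" and gv: "\<forall>l\<in>L. vecs R r (g l)" and nd: "\<not> indepS R M r g L"
  shows "\<exists>l0\<in>L. spanS R M r (L - {l0}) g (g l0)"
proof -
  obtain c where c: "\<forall>l\<in>L. c l \<in> carrier R" "\<forall>i<r. (\<Oplus>l\<in>L. c l \<otimes> g l i) \<in> M" "\<exists>l\<in>L. c l \<notin> M"
    using nd unfolding indepS_def by blast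
  then obtain l0 where l0: "l0 \<in> L" "c l0 \<notin> M" by blast
  have gc: "\<And>l i. l \<in> L \<Longrightarrow> i < r \<Longrightarrow> g l i \<in> carrier R" using gv unfolding vecs_def by blast
  define t where "t = inv (c l0)"
  have cl0: "c l0 \<in> carrier R" using c l0 by blast
  have tc: "t \<in> carrier R" and tcd: "t \<otimes> c l0 = \<one>" unfolding t_def using inv_c inv_l cl0 l0 by auto
  define L' where "L' = L - {l0}"
  have LL': "L = insert l0 L'" "l0 \<notin> L'" "finite L'" unfolding L'_def using l0 L by auto
  have "spanS R M r L' g (g l0)"
    unfolding spanS_def
  proof (intro exI[of _ "\<lambda>l. (\<ominus> t) \<otimes> c l"] conjI ballI allI impI)
    show "(\<ominus> t) \<otimes> c l \<in> carrier R" if "l \<in> L'" for l using that tc c LL' by blast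
    fix i assume i: "i < r"
    define S where "S = (\<Oplus>l\<in>L'. c l \<otimes> g l i)"
    have Sc: "S \<in> carrier R" unfolding S_def using c gc i LL' by (auto intro!: finsum_closed)
    have "(\<Oplus>l\<in>L'. (\<ominus> t) \<otimes> c l \<otimes> g l i) = (\<Oplus>l\<in>L'. (\<ominus> t) \<otimes> (c l \<otimes> g l i))"
      using tc c gc i LL' by (intro finsum_cong') (auto simp: Pi_def m_assoc)
    also have "\<dots> = (\<ominus> t) \<otimes> S" unfolding S_def
      using tc c gc i LL' by (subst finsum_rdistr) (auto simp: Pi_def)
    finally have e: "(\<Oplus>l\<in>L'. (\<ominus> t) \<otimes> c l \<otimes> g l i) = (\<ominus> t) \<otimes> S" .
    have tot: "(\<Oplus>l\<in>L. c l \<otimes> g l i) = c l0 \<otimes> g l0 i \<oplus> S"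
      unfolding S_def LL'(1) using LL' c gc i by (subst finsum_insert) (auto simp: Pi_def)
    show "g l0 i \<ominus> (\<Oplus>l\<in>L'. (\<ominus> t) \<otimes> c l \<otimes> g l i) \<in> M"
      unfolding e using alg1[OF gc[OF l0(1) i] Sc tc cl0 tcd] M_mult[OF c(2)[rule_format, OF i, unfolded tot] tc]
      by simp
  qed
  then show ?thesis using l0 unfolding L'_def by blast
qed

lemma dep_dim:
  assumes P: "P \<subseteq> {a. vecs R r a}" and L: "finite L" and gv: "\<forall>l\<in>L. vecs R r (g l)"
    and nd: "\<not> indepS R M r g L" and sp: "\<forall>a\<in>P. spanS R M r L g a"
  shows "dimS R M r P < card L"
proof -
  obtain l0 where l0: "l0 \<in> L" "spanS R M r (L - {l0}) g (g l0)" using dep_one[OF L gv nd] by blast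
  have "\<forall>a\<in>P. spanS R M r (L - {l0}) g a"
  proof
    fix a assume a: "a \<in> P"
    have "L = insert l0 (L - {l0})" using l0 by blast
    then show "spanS R M r (L - {l0}) g a"
      using span_remove[of "L - {l0}" l0 r g a] L gv a P l0 sp by auto
  qed
  then have "dimS R M r P \<le> card (L - {l0})"
    by (intro dim_le_span[OF P]) (use L gv in auto)
  then show ?thesis using l0 L card_Diff1_less by fastforce
qed

end


context lring
begin

lemma sq_ideal: "ideal (ideal_sq R M) R"
  unfolding ideal_sq_def by (rule genideal_ideal) (use M_carr in auto)

lemma sq_prod: "a \<in> M \<Longrightarrow> b \<in> M \<Longrightarrow> a \<otimes> b \<in> ideal_sq R M"
  unfolding ideal_sq_def by (rule subsetD[OF genideal_self]) (use M_carr in auto)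

lemma sq_sub: "ideal_sq R M \<subseteq> M"
  unfolding ideal_sq_def by (rule genideal_minimal[OF M_ideal]) (use M_mult2 M_carr in auto)

lemma key_lemma:
  assumes ys: "set ys \<subseteq> M" "Idl (set ys) = M"
    and minl: "\<forall>zs. set zs \<subseteq> M \<and> Idl (set zs) = M \<longrightarrow> length ys \<le> length zs"
    and c: "\<forall>i<length ys. c i \<in> carrier R" and sq: "lc ys c \<in> ideal_sq R M"
  shows "\<forall>i<length ys. c i \<in> M"
proof -
  have ysc: "set ys \<subseteq> carrier R" using ys M_carr by blast
  define T where "T = {x. \<exists>d. (\<forall>i<length ys. d i \<in> M) \<and> x = lc ys d}"
  have "ideal T R"
  proof (rule ideal_crit)
    show "T \<subseteq> carrier R" unfolding T_def using lc_closed[OF ysc] M_carr by blast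
    have "lc ys (\<lambda>_. \<zero>) = (\<Oplus>i\<in>{..<length ys}. \<zero>)" unfolding lc_def using ysc by (intro finsum_cong') auto
    then have "lc ys (\<lambda>_. \<zero>) = \<zero>" by simp
    then show "\<zero> \<in> T" unfolding T_def using M_zero by (intro CollectI exI[of _ "\<lambda>_. \<zero>"]) auto
    show "a \<oplus> b \<in> T" if ab: "a \<in> T" "b \<in> T" for a b
    proof -
      obtain d d' where d: "\<forall>i<length ys. d i \<in> M" "a = lc ys d" "\<forall>i<length ys. d' i \<in> M" "b = lc ys d'"
        using ab unfolding T_def by blast
      have "a \<oplus> b = lc ys (\<lambda>i. d i \<oplus> d' i)" using d lc_add[OF ysc] M_carr by simp
      then show ?thesis unfolding T_def using d M_add by (intro CollectI exI[of _ "\<lambda>i. d i \<oplus> d' i"]) auto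
    qed
    show "x \<otimes> a \<in> T" if ax: "a \<in> T" "x \<in> carrier R" for a x
    proof -
      obtain d where d: "\<forall>i<length ys. d i \<in> M" "a = lc ys d" using ax unfolding T_def by blast
      have "x \<otimes> a = lc ys (\<lambda>i. x \<otimes> d i)" using d lc_smult[OF ysc] M_carr ax by simp
      then show ?thesis unfolding T_def using d M_mult ax by (intro CollectI exI[of _ "\<lambda>i. x \<otimes> d i"]) auto
    qed
  qed
  moreover have "{a \<otimes> b | a b. a \<in> M \<and> b \<in> M} \<subseteq> T"
  proof
    fix z assume "z \<in> {a \<otimes> b | a b. a \<in> M \<and> b \<in> M}"
    then obtain a b where ab: "a \<in> M" "b \<in> M" "z = a \<otimes> b" by blast
    obtain e where e: "\<forall>i<length ys. e i \<in> carrier R" "a = lc ys e"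
      using ab(1) ys(2) genideal_lc[OF ysc] by blast
    have "z = b \<otimes> lc ys e" using ab e M_carr m_comm by simp
    also have "\<dots> = lc ys (\<lambda>i. b \<otimes> e i)" using lc_smult[OF ysc] e ab M_carr by simp
    finally show "z \<in> T" unfolding T_def using e ab M_mult2 by (intro CollectI exI[of _ "\<lambda>i. b \<otimes> e i"]) auto
  qed
  ultimately have "ideal_sq R M \<subseteq> T" unfolding ideal_sq_def using genideal_minimal by blast
  then obtain d where d: "\<forall>i<length ys. d i \<in> M" "lc ys c = lc ys d" using sq unfolding T_def by blast
  show ?thesis
  proof (rule ccontr)
    assume "\<not> (\<forall>i<length ys. c i \<in> M)"
    then obtain i0 where i0: "i0 < length ys" "c i0 \<notin> M" by blast
    define e where "e i = c i \<ominus> d i" for i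
    have ec: "\<And>i. i < length ys \<Longrightarrow> e i \<in> carrier R" unfolding e_def using c d M_carr by blast
    have "lc ys e = lc ys c \<ominus> lc ys d" unfolding e_def
      by (rule lc_minus[OF ysc, symmetric]) (use c d M_carr in auto)
    then have le: "lc ys e = lc ys d \<ominus> lc ys d" using d(2) by simp
    have "lc ys d \<in> carrier R" by (rule lc_closed[OF ysc]) (use d M_carr in auto)
    then have lz: "lc ys e = \<zero>" unfolding le a_minus_def by (rule r_neg)
    have ei0: "e i0 \<notin> M"
    proof
      assume "e i0 \<in> M"
      moreover have "c i0 \<in> carrier R" "d i0 \<in> carrier R" using c d i0 M_carr by auto
      then have "c i0 = e i0 \<oplus> d i0" unfolding e_def by algebra
      ultimately show False using M_add d i0 by auto
    qed
    define zs where "zs = take i0 ys @ drop (Suc i0) ys"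
    have zss: "set zs \<subseteq> set ys" unfolding zs_def by (auto dest: in_set_takeD in_set_dropD)
    have zsc: "set zs \<subseteq> carrier R" using zss ysc by blast
    have others: "ys ! i \<in> set zs" if "i < length ys" "i \<noteq> i0" for i
    proof (cases "i < i0")
      case True
      then have "ys ! i = take i0 ys ! i" by simp
      moreover have "i < length (take i0 ys)" using True i0 by simp
      ultimately show ?thesis unfolding zs_def by (metis UnI1 nth_mem set_append)
    next
      case False
      then have ii: "Suc i0 \<le> i" using that by simp
      then have "ys ! i = drop (Suc i0) ys ! (i - Suc i0)" using that by simp
      moreover have "i - Suc i0 < length (drop (Suc i0) ys)" using that ii by simp
      ultimately show ?thesis unfolding zs_def by (metis UnI2 nth_mem set_append)
    qed
    define S where "S = (\<Oplus>i\<in>{..<length ys} - {i0}. ys ! i \<otimes> e i)"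
    have Sc: "S \<in> carrier R" unfolding S_def using ysc ec by (auto intro!: finsum_closed)
    have "lc ys e = ys ! i0 \<otimes> e i0 \<oplus> S"
    proof -
      have "{..<length ys} = insert i0 ({..<length ys} - {i0})" using i0 by auto
      then have "lc ys e = (\<Oplus>i\<in>insert i0 ({..<length ys} - {i0}). ys ! i \<otimes> e i)" unfolding lc_def by simp
      also have "\<dots> = ys ! i0 \<otimes> e i0 \<oplus> S" unfolding S_def
        using ysc ec i0 by (subst finsum_insert) (auto simp: Pi_def)
      finally show ?thesis .
    qed
    then have z: "ys ! i0 \<otimes> e i0 \<oplus> S = \<zero>" using lz by simp
    have zI: "ideal (Idl (set zs)) R" using genideal_ideal[OF zsc] .
    have SI: "S \<in> Idl (set zs)" unfolding S_def
      by (rule ideal_finsum[OF zI]) (use others genideal_self[OF zsc] ec in \<open>auto intro: ideal.I_r_closed[OF zI]\<close>)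
    define t where "t = inv (e i0)"
    have tc: "t \<in> carrier R" and te: "t \<otimes> e i0 = \<one>" unfolding t_def using inv_c inv_l ec i0 ei0 by auto
    have "ys ! i0 = (\<ominus> t) \<otimes> S" using alg7[OF _ ec[OF i0(1)] Sc tc z te] ysc i0 by simp
    then have y0: "ys ! i0 \<in> Idl (set zs)" using ideal.I_l_closed[OF zI SI] tc by simp
    have "set ys \<subseteq> Idl (set zs)"
    proof
      fix y assume "y \<in> set ys"
      then obtain i where i: "i < length ys" "y = ys ! i" by (auto simp: in_set_conv_nth)
      show "y \<in> Idl (set zs)"
      proof (cases "i = i0")
        case True then show ?thesis using y0 i by simp
      next
        case False then show ?thesis using others[OF i(1)] genideal_self[OF zsc] i by auto
      qed
    qed
    then have "M \<subseteq> Idl (set zs)" using ys(2) genideal_minimal[OF zI] by blast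
    moreover have "Idl (set zs) \<subseteq> M" using genideal_minimal[OF M_ideal] zss ys(1) by blast
    moreover have "set zs \<subseteq> M" using zss ys(1) by blast
    ultimately have "length ys \<le> length zs" using minl by blast
    moreover have "length zs = length ys - 1" unfolding zs_def using i0 by simp
    ultimately show False using i0 by simp
  qed
qed

lemma nakayama:
  assumes K: "ideal K R"
  shows "set ys \<subseteq> carrier R \<Longrightarrow> (\<forall>j<length ys. \<exists>a\<in>K. \<exists>\<epsilon>. (\<forall>t<length ys. \<epsilon> t \<in> M) \<and> ys ! j = a \<oplus> lc ys \<epsilon>)
     \<Longrightarrow> \<forall>j<length ys. ys ! j \<in> K"
proof (induction ys)
  case Nil then show ?case by simp
next
  case (Cons y ys0)
  have ysc: "set ys0 \<subseteq> carrier R" and yc: "y \<in> carrier R" using Cons.prems by auto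
  have lcs: "lc (y # ys0) \<epsilon> = y \<otimes> \<epsilon> 0 \<oplus> lc ys0 (\<lambda>t. \<epsilon> (Suc t))"
    if "\<forall>t<length (y # ys0). \<epsilon> t \<in> M" for \<epsilon>
    unfolding lc_def using fs_Suc0[of "\<lambda>i. (y # ys0) ! i \<otimes> \<epsilon> i" "length ys0"] that ysc yc M_carr
    by (auto simp: Pi_def less_Suc_eq_0_disj)
  obtain a \<epsilon> where a: "a \<in> K" "\<forall>t<length (y # ys0). \<epsilon> t \<in> M" "y = a \<oplus> lc (y # ys0) \<epsilon>"
    using Cons.prems(2) by fastforce
  have e0: "\<epsilon> 0 \<in> M" using a by simp
  have eS: "\<And>t. t < length ys0 \<Longrightarrow> \<epsilon> (Suc t) \<in> M" using a by simp
  have ac: "a \<in> carrier R" using a ideal.Icarr[OF K] by blast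
  have y1: "y = a \<oplus> (y \<otimes> \<epsilon> 0 \<oplus> lc ys0 (\<lambda>t. \<epsilon> (Suc t)))" using a lcs by simp
  define u where "u = \<one> \<ominus> \<epsilon> 0"
  have uc: "u \<in> carrier R" unfolding u_def using e0 M_carr by simp
  have uM: "u \<notin> M"
  proof
    assume "u \<in> M"
    moreover have "\<one> = u \<oplus> \<epsilon> 0" unfolding u_def using e0 M_carr by algebra
    ultimately show False using M_add e0 one_notin by metis
  qed
  define v where "v = inv u"
  have vc: "v \<in> carrier R" and vu: "v \<otimes> u = \<one>" unfolding v_def using inv_c inv_l uc uM by auto
  define a' where "a' = v \<otimes> a"
  define \<epsilon>' where "\<epsilon>' t = v \<otimes> \<epsilon> (Suc t)" for t
  have a'K: "a' \<in> K" unfolding a'_def using ideal.I_l_closed[OF K a(1) vc] .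
  have a'c: "a' \<in> carrier R" using a'K ideal.Icarr[OF K] by blast
  have e'M: "\<And>t. t < length ys0 \<Longrightarrow> \<epsilon>' t \<in> M" unfolding \<epsilon>'_def using eS M_mult vc by blast
  have e'c: "\<And>t. t < length ys0 \<Longrightarrow> \<epsilon>' t \<in> carrier R" using e'M M_carr by blast
  have Lc: "lc ys0 (\<lambda>t. \<epsilon> (Suc t)) \<in> carrier R" by (rule lc_closed[OF ysc]) (use eS M_carr in blast)
  have yeq: "y = a' \<oplus> lc ys0 \<epsilon>'"
  proof -
    have "y = v \<otimes> a \<oplus> v \<otimes> lc ys0 (\<lambda>t. \<epsilon> (Suc t))"
      by (rule alg8[OF yc _ ac Lc vc y1]) (use e0 M_carr vu u_def in auto)
    also have "v \<otimes> lc ys0 (\<lambda>t. \<epsilon> (Suc t)) = lc ys0 \<epsilon>'"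
      unfolding \<epsilon>'_def using lc_smult[OF ysc] eS M_carr vc by simp
    finally show ?thesis unfolding a'_def .
  qed
  have hyp0: "\<forall>j<length ys0. \<exists>b\<in>K. \<exists>\<eta>. (\<forall>t<length ys0. \<eta> t \<in> M) \<and> ys0 ! j = b \<oplus> lc ys0 \<eta>"
  proof (intro allI impI)
    fix j assume j: "j < length ys0"
    obtain b \<eta> where b: "b \<in> K" "\<forall>t<length (y # ys0). \<eta> t \<in> M" "(y # ys0) ! Suc j = b \<oplus> lc (y # ys0) \<eta>"
      using Cons.prems(2) j by (metis Suc_less_eq length_Cons)
    have bc: "b \<in> carrier R" using b ideal.Icarr[OF K] by blast
    have h0: "\<eta> 0 \<in> M" and hS: "\<And>t. t < length ys0 \<Longrightarrow> \<eta> (Suc t) \<in> M" using b by auto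
    have L2c: "lc ys0 (\<lambda>t. \<eta> (Suc t)) \<in> carrier R" by (rule lc_closed[OF ysc]) (use hS M_carr in blast)
    have L1c: "lc ys0 \<epsilon>' \<in> carrier R" by (rule lc_closed[OF ysc]) (use e'c in blast)
    have "ys0 ! j = b \<oplus> (y \<otimes> \<eta> 0 \<oplus> lc ys0 (\<lambda>t. \<eta> (Suc t)))" using b lcs by simp
    also have "\<dots> = b \<oplus> ((a' \<oplus> lc ys0 \<epsilon>') \<otimes> \<eta> 0 \<oplus> lc ys0 (\<lambda>t. \<eta> (Suc t)))" using yeq by simp
    also have "\<dots> = (b \<oplus> a' \<otimes> \<eta> 0) \<oplus> (\<eta> 0 \<otimes> lc ys0 \<epsilon>' \<oplus> lc ys0 (\<lambda>t. \<eta> (Suc t)))"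
      by (rule alg9) (use bc a'c L1c L2c h0 M_carr in auto)
    also have "\<eta> 0 \<otimes> lc ys0 \<epsilon>' = lc ys0 (\<lambda>t. \<eta> 0 \<otimes> \<epsilon>' t)"
      using lc_smult[OF ysc] e'c h0 M_carr by simp
    also have "lc ys0 (\<lambda>t. \<eta> 0 \<otimes> \<epsilon>' t) \<oplus> lc ys0 (\<lambda>t. \<eta> (Suc t)) = lc ys0 (\<lambda>t. \<eta> 0 \<otimes> \<epsilon>' t \<oplus> \<eta> (Suc t))"
      using lc_add[OF ysc] e'c h0 hS M_carr by simp
    finally have "ys0 ! j = (b \<oplus> a' \<otimes> \<eta> 0) \<oplus> lc ys0 (\<lambda>t. \<eta> 0 \<otimes> \<epsilon>' t \<oplus> \<eta> (Suc t))" .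
    moreover have "b \<oplus> a' \<otimes> \<eta> 0 \<in> K" using ideal_add[OF K b(1) ideal.I_r_closed[OF K a'K M_carr[OF h0]]] .
    moreover have "\<forall>t<length ys0. \<eta> 0 \<otimes> \<epsilon>' t \<oplus> \<eta> (Suc t) \<in> M"
    proof (intro allI impI)
      fix t assume t: "t < length ys0"
      show "\<eta> 0 \<otimes> \<epsilon>' t \<oplus> \<eta> (Suc t) \<in> M" using M_add[OF M_mult2[OF h0 e'c[OF t]] hS[OF t]] .
    qed
    ultimately show "\<exists>b\<in>K. \<exists>\<eta>. (\<forall>t<length ys0. \<eta> t \<in> M) \<and> ys0 ! j = b \<oplus> lc ys0 \<eta>"
      by (intro bexI[where x="b \<oplus> a' \<otimes> \<eta> 0"] exI[where x="\<lambda>t. \<eta> 0 \<otimes> \<epsilon>' t \<oplus> \<eta> (Suc t)"] conjI)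
  qed
  have IH: "\<forall>j<length ys0. ys0 ! j \<in> K" using Cons.IH[OF ysc hyp0] .
  then have "set ys0 \<subseteq> K" by (auto simp: in_set_conv_nth)
  then have "lc ys0 \<epsilon>' \<in> K" using lc_in_ideal[OF K] e'c by blast
  then have "y \<in> K" using yeq ideal_add[OF K a'K] by simp
  then show ?case using IH by (auto simp: nth_Cons' )
qed

end


lemma nlr_cring: "noetherian_local_ring R \<Longrightarrow> cring R"
  unfolding noetherian_local_ring_def noetherian_ring_def by blast

lemma nlr_max: assumes "noetherian_local_ring R" shows "maximalideal (max_ideal R) R"
  and "\<And>N. maximalideal N R \<Longrightarrow> N = max_ideal R"
proof -
  have u: "\<exists>!m. maximalideal m R" using assms unfolding noetherian_local_ring_def by blast
  show "maximalideal (max_ideal R) R" unfolding max_ideal_def using theI'[OF u] .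
  fix N assume "maximalideal N R"
  then show "N = max_ideal R" unfolding max_ideal_def using u the1_equality by metis
qed

lemma nlr_lring: assumes "noetherian_local_ring R" shows "lring R (max_ideal R)"
  unfolding lring_def lring_axioms_def using nlr_cring[OF assms] nlr_max[OF assms] by blast

lemma nlr_mb_ex: assumes "noetherian_local_ring R" shows "\<exists>xs. minimal_basis R xs"
proof -
  interpret lring R "max_ideal R" using nlr_lring[OF assms] .
  obtain S where S: "finite S" "S \<subseteq> carrier R" "max_ideal R = Idl\<^bsub>R\<^esub> S"
    using assms M_ideal unfolding noetherian_local_ring_def noetherian_ring_def by blast
  obtain xs0 where xs0: "set xs0 = S" using finite_list[OF S(1)] by blast
  have "set xs0 \<subseteq> max_ideal R" using S xs0 genideal_self by blast
  then have ex: "\<exists>k xs. length xs = k \<and> set xs \<subseteq> max_ideal R \<and> Idl\<^bsub>R\<^esub> (set xs) = max_ideal R"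
    using S xs0 by blast
  then obtain xs where "length xs = num_gens R (max_ideal R)" "set xs \<subseteq> max_ideal R" "Idl\<^bsub>R\<^esub> (set xs) = max_ideal R"
    unfolding num_gens_def using LeastI_ex[of "\<lambda>k. \<exists>xs. length xs = k \<and> set xs \<subseteq> max_ideal R \<and> Idl\<^bsub>R\<^esub> (set xs) = max_ideal R"]
    by blast
  then show ?thesis unfolding minimal_basis_def by blast
qed

lemma mb_props:
  assumes "minimal_basis R xs"
  shows "set xs \<subseteq> max_ideal R" "Idl\<^bsub>R\<^esub> (set xs) = max_ideal R"
    "\<forall>zs. set zs \<subseteq> max_ideal R \<and> Idl\<^bsub>R\<^esub> (set zs) = max_ideal R \<longrightarrow> length xs \<le> length zs"
  using assms unfolding minimal_basis_def num_gens_def by (auto intro: Least_le)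

lemma mb_intro:
  assumes "minimal_basis R xs" "set ys \<subseteq> max_ideal R" "Idl\<^bsub>R\<^esub> (set ys) = max_ideal R" "length ys = length xs"
  shows "minimal_basis R ys"
  using assms unfolding minimal_basis_def by simp

locale lquot = lring + fixes J
  assumes J_ideal: "ideal J R" and J_proper: "\<one> \<notin> J"
begin

lemma JM: "J \<subseteq> M" using proper_sub_M J_ideal J_proper by blast

lemma pi_hom: "ring_hom_cring R (R Quot J) ((+>) J)"
  using ideal.rcos_ring_hom_cring[OF J_ideal is_cring] .

lemma Qc: "cring (R Quot J)" using ideal.quotient_is_cring[OF J_ideal is_cring] .

lemma pi_carr: "a \<in> carrier R \<Longrightarrow> J +> a \<in> carrier (R Quot J)"
  using ring_hom_memE(1)[OF ideal.rcos_ring_hom[OF J_ideal]] by blast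

lemma Q_surj: "x \<in> carrier (R Quot J) \<Longrightarrow> \<exists>a\<in>carrier R. x = J +> a"
  unfolding FactRing_def A_RCOSETS_def' by auto

lemma pi_mult: "a \<in> carrier R \<Longrightarrow> b \<in> carrier R \<Longrightarrow> (J +> a) \<otimes>\<^bsub>R Quot J\<^esub> (J +> b) = J +> (a \<otimes> b)"
  using ring_hom_memE(2)[OF ideal.rcos_ring_hom[OF J_ideal]] by metis

lemma pi_one: "\<one>\<^bsub>R Quot J\<^esub> = J +> \<one>" unfolding FactRing_def by simp

lemma pi_mem:
  assumes U: "ideal U R" "J \<subseteq> U" and a: "a \<in> carrier R"
  shows "J +> a \<in> (+>) J ` U \<longleftrightarrow> a \<in> U"
proof
  assume "J +> a \<in> (+>) J ` U"
  then obtain u where u: "u \<in> U" "J +> a = J +> u" by blast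
  have uc: "u \<in> carrier R" using u ideal.Icarr[OF U(1)] by blast
  have "a \<ominus> u \<in> J" using quotient_eq_iff_same_a_r_cos[OF J_ideal a uc] u by blast
  then have "(a \<ominus> u) \<oplus> u \<in> U" using ideal_add[OF U(1)] U(2) u by blast
  moreover have "(a \<ominus> u) \<oplus> u = a" using a uc by algebra
  ultimately show "a \<in> U" by simp
qed (auto)

definition Mq where "Mq = (+>) J ` M"

lemma Mq_ideal: "ideal Mq (R Quot J)"
  unfolding Mq_def using ring_ideal_imp_quot_ideal[OF J_ideal M_ideal] .

lemma Mq_mem: "a \<in> carrier R \<Longrightarrow> J +> a \<in> Mq \<longleftrightarrow> a \<in> M"
  unfolding Mq_def using pi_mem[OF M_ideal JM] by blast

lemma one_Mq: "\<one>\<^bsub>R Quot J\<^esub> \<notin> Mq"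
  using Mq_mem[of \<one>] one_notin unfolding pi_one by simp

lemma proper_Q: assumes N: "ideal N (R Quot J)" "\<one>\<^bsub>R Quot J\<^esub> \<notin> N" shows "N \<subseteq> Mq"
proof
  fix x assume x: "x \<in> N"
  then have "x \<in> carrier (R Quot J)" using ideal.Icarr[OF N(1)] by blast
  then obtain a where a: "a \<in> carrier R" "x = J +> a" using Q_surj by blast
  show "x \<in> Mq"
  proof (rule ccontr)
    assume "x \<notin> Mq"
    then have aM: "a \<notin> M" using Mq_mem a by blast
    have "(J +> inv a) \<otimes>\<^bsub>R Quot J\<^esub> x \<in> N"
      using ideal.I_l_closed[OF N(1) x pi_carr[OF inv_c[OF a(1) aM]]] .
    moreover have "(J +> inv a) \<otimes>\<^bsub>R Quot J\<^esub> x = \<one>\<^bsub>R Quot J\<^esub>"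
      unfolding a(2) pi_one using pi_mult[OF inv_c[OF a(1) aM] a(1)] inv_l[OF a(1) aM] by simp
    ultimately show False using N(2) by simp
  qed
qed

lemma Mq_max: "maximalideal Mq (R Quot J)"
proof (rule maximalidealI)
  show "ideal Mq (R Quot J)" by (rule Mq_ideal)
  show "carrier (R Quot J) \<noteq> Mq" using one_Mq ring.ring_simprules(6)[OF ideal.quotient_is_ring[OF J_ideal]] by blast
  fix N assume N: "ideal N (R Quot J)" "Mq \<subseteq> N" "N \<subseteq> carrier (R Quot J)"
  show "N = Mq \<or> N = carrier (R Quot J)"
  proof (cases "\<one>\<^bsub>R Quot J\<^esub> \<in> N")
    case True then show ?thesis using ideal.one_imp_carrier[OF N(1)] by blast
  next
    case False then show ?thesis using proper_Q[OF N(1)] N(2) by blast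
  qed
qed

lemma maxQ: "max_ideal (R Quot J) = Mq"
proof -
  have "\<And>N. maximalideal N (R Quot J) \<Longrightarrow> N = Mq"
  proof -
    fix N assume N: "maximalideal N (R Quot J)"
    have "\<one>\<^bsub>R Quot J\<^esub> \<notin> N"
      using maximalideal.I_notcarr[OF N] ideal.one_imp_carrier[OF maximalideal.axioms(1)[OF N]] by blast
    then have "N \<subseteq> Mq" using proper_Q[OF maximalideal.axioms(1)[OF N]] by blast
    moreover have "Mq \<subseteq> carrier (R Quot J)" using ideal.Icarr[OF Mq_ideal] by blast
    ultimately have "Mq = N \<or> Mq = carrier (R Quot J)"
      using maximalideal.I_maximal[OF N Mq_ideal] by blast
    moreover have "carrier (R Quot J) \<noteq> Mq" using maximalideal.I_notcarr[OF Mq_max] .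
    ultimately show "N = Mq" by auto
  qed
  then show ?thesis unfolding max_ideal_def by (rule the_equality[where P="\<lambda>m. maximalideal m (R Quot J)", OF Mq_max])
qed

end


lemma set_add_mem: "x \<in> set_add R A B \<longleftrightarrow> (\<exists>a\<in>A. \<exists>b\<in>B. x = a \<oplus>\<^bsub>R\<^esub> b)"
  unfolding set_add_def' by auto

context lquot
begin

definition U where "U = set_add R J (ideal_sq R M)"

lemma U_ideal: "ideal U R" unfolding U_def using add_ideals[OF J_ideal sq_ideal] .

lemma JU: "J \<subseteq> U"
proof
  fix j assume j: "j \<in> J"
  have "j = j \<oplus> \<zero>" using j ideal.Icarr[OF J_ideal] by simp
  then show "j \<in> U" unfolding U_def set_add_mem using j ideal_zero[OF sq_ideal] by blast
qed

lemma sqU: "ideal_sq R M \<subseteq> U"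
proof
  fix s assume s: "s \<in> ideal_sq R M"
  have "s = \<zero> \<oplus> s" using s ideal.Icarr[OF sq_ideal] by simp
  then show "s \<in> U" unfolding U_def set_add_mem using s ideal_zero[OF J_ideal] by blast
qed

lemma Qr: "ring (R Quot J)" using ideal.quotient_is_ring[OF J_ideal] .

definition GQ where "GQ = {x \<otimes>\<^bsub>R Quot J\<^esub> y | x y. x \<in> Mq \<and> y \<in> Mq}"

lemma GQ_carr: "GQ \<subseteq> carrier (R Quot J)"
  unfolding GQ_def using ideal.Icarr[OF Mq_ideal] ring.ring_simprules(5)[OF Qr] by blast

lemma sqQ: "ideal_sq (R Quot J) Mq = (+>) J ` U"
proof
  have W: "ideal ((+>) J ` U) (R Quot J)" using ring_ideal_imp_quot_ideal[OF J_ideal U_ideal] .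
  have "GQ \<subseteq> (+>) J ` U"
  proof
    fix z assume "z \<in> GQ"
    then obtain x y where xy: "x \<in> Mq" "y \<in> Mq" "z = x \<otimes>\<^bsub>R Quot J\<^esub> y" unfolding GQ_def by blast
    then obtain a b where ab: "a \<in> M" "b \<in> M" "x = J +> a" "y = J +> b" unfolding Mq_def by blast
    have "z = J +> (a \<otimes> b)" using xy ab pi_mult M_carr by simp
    moreover have "a \<otimes> b \<in> U" using sq_prod[OF ab(1,2)] sqU by blast
    ultimately show "z \<in> (+>) J ` U" by blast
  qed
  then show "ideal_sq (R Quot J) Mq \<subseteq> (+>) J ` U"
    unfolding ideal_sq_def GQ_def[symmetric] using ring.genideal_minimal[OF Qr W] by blast
next
  have SQ: "ideal (ideal_sq (R Quot J) Mq) (R Quot J)"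
    unfolding ideal_sq_def GQ_def[symmetric] using ring.genideal_ideal[OF Qr GQ_carr] .
  define V where "V = {a \<in> carrier R. J +> a \<in> ideal_sq (R Quot J) Mq}"
  have V: "ideal V R" unfolding V_def
    using ring_hom_ring.ideal_vimage[OF ideal.rcos_ring_hom_ring[OF J_ideal] SQ] .
  have JV: "J \<subseteq> V"
  proof
    fix j assume j: "j \<in> J"
    have "J +> j = J" using a_rcos_zero[OF J_ideal j] .
    moreover have "J \<in> ideal_sq (R Quot J) Mq" using ideal_zero[OF SQ] unfolding FactRing_def by simp
    ultimately show "j \<in> V" unfolding V_def using j ideal.Icarr[OF J_ideal] by simp
  qed
  have "{a \<otimes> b | a b. a \<in> M \<and> b \<in> M} \<subseteq> V"
  proof
    fix z assume "z \<in> {a \<otimes> b | a b. a \<in> M \<and> b \<in> M}"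
    then obtain a b where ab: "a \<in> M" "b \<in> M" "z = a \<otimes> b" by blast
    have "J +> z = (J +> a) \<otimes>\<^bsub>R Quot J\<^esub> (J +> b)" using ab pi_mult M_carr by simp
    moreover have "(J +> a) \<otimes>\<^bsub>R Quot J\<^esub> (J +> b) \<in> GQ" unfolding GQ_def Mq_def using ab by blast
    ultimately have "J +> z \<in> ideal_sq (R Quot J) Mq"
      unfolding ideal_sq_def GQ_def[symmetric] using ring.genideal_self[OF Qr GQ_carr] by auto
    then show "z \<in> V" unfolding V_def using ab M_carr by simp
  qed
  then have sqV: "ideal_sq R M \<subseteq> V" unfolding ideal_sq_def using genideal_minimal[OF V] by blast
  have "U \<subseteq> V"
  proof
    fix x assume "x \<in> U"
    then obtain a b where ab: "a \<in> J" "b \<in> ideal_sq R M" "x = a \<oplus> b" unfolding U_def set_add_mem by blast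
    then show "x \<in> V" using ideal_add[OF V] JV sqV by blast
  qed
  then show "(+>) J ` U \<subseteq> ideal_sq (R Quot J) Mq" unfolding V_def by blast
qed

lemma sqQ_mem: "a \<in> carrier R \<Longrightarrow> J +> a \<in> ideal_sq (R Quot J) Mq \<longleftrightarrow> a \<in> U"
  unfolding sqQ using pi_mem[OF U_ideal JU] by blast

lemma pi_fs:
  assumes "finite A" "\<And>i. i \<in> A \<Longrightarrow> f i \<in> carrier R" "\<And>i. i \<in> A \<Longrightarrow> g i \<in> carrier R"
  shows "J +> (\<Oplus>i\<in>A. f i \<otimes> g i) = (\<Oplus>\<^bsub>R Quot J\<^esub>i\<in>A. (J +> f i) \<otimes>\<^bsub>R Quot J\<^esub> (J +> g i))"
proof -
  interpret Q: cring "R Quot J" by (rule Qc)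
  have "J +> (\<Oplus>i\<in>A. f i \<otimes> g i) = (\<Oplus>\<^bsub>R Quot J\<^esub>i\<in>A. J +> (f i \<otimes> g i))"
    using ring_hom_cring.hom_finsum[OF pi_hom, of "\<lambda>i. f i \<otimes> g i" A] assms by (auto simp: Pi_def comp_def)
  also have "\<dots> = (\<Oplus>\<^bsub>R Quot J\<^esub>i\<in>A. (J +> f i) \<otimes>\<^bsub>R Quot J\<^esub> (J +> g i))"
    using assms pi_mult pi_carr by (intro Q.finsum_cong') (auto simp: Pi_def)
  finally show ?thesis .
qed

definition rep where "rep x = (SOME a. a \<in> carrier R \<and> x = J +> a)"

lemma rep: "x \<in> carrier (R Quot J) \<Longrightarrow> rep x \<in> carrier R \<and> x = J +> rep x"
  unfolding rep_def using Q_surj someI_ex[of "\<lambda>a. a \<in> carrier R \<and> x = J +> a"] by blast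

end


context lquot
begin

lemma rd_quot:
  assumes xsc: "set xs \<subseteq> carrier R" and xsdef: "xs = (SOME xs. minimal_basis R xs)"
  shows "rd R (R Quot J) ((+>) J) = dimS R M (length xs) {a. vecs R (length xs) a \<and> lc xs a \<in> U}"
proof -
  interpret Q: cring "R Quot J" by (rule Qc)
  define r where "r = length xs"
  define P where "P = {a. vecs R r a \<and> lc xs a \<in> U}"
  define K where "K = {b. (\<forall>i<r. b i \<in> carrier (R Quot J)) \<and>
     (\<Oplus>\<^bsub>R Quot J\<^esub>i\<in>{..<r}. (J +> xs ! i) \<otimes>\<^bsub>R Quot J\<^esub> b i) \<in> ideal_sq (R Quot J) Mq}"
  have xi: "\<And>i. i < r \<Longrightarrow> xs ! i \<in> carrier R" unfolding r_def using xsc by simp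
  have lc_pi: "J +> lc xs a = (\<Oplus>\<^bsub>R Quot J\<^esub>i\<in>{..<r}. (J +> xs ! i) \<otimes>\<^bsub>R Quot J\<^esub> (J +> a i))"
    if "vecs R r a" for a
    unfolding lc_def r_def[symmetric] by (rule pi_fs) (use that xi in \<open>auto simp: vecs_def\<close>)
  have eqv: "(\<exists>v. (\<forall>j<k. v j \<in> K) \<and> indep_mod (R Quot J) Mq r v k) \<longleftrightarrow>
             (\<exists>u. (\<forall>j<k. u j \<in> P) \<and> indep_mod R M r u k)" for k
  proof
    assume "\<exists>v. (\<forall>j<k. v j \<in> K) \<and> indep_mod (R Quot J) Mq r v k"
    then obtain v where v: "\<forall>j<k. v j \<in> K" "indep_mod (R Quot J) Mq r v k" by blast
    define u where "u j i = rep (v j i)" for j i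
    have vc: "\<And>j i. j < k \<Longrightarrow> i < r \<Longrightarrow> v j i \<in> carrier (R Quot J)" using v unfolding K_def by blast
    have uc: "\<And>j i. j < k \<Longrightarrow> i < r \<Longrightarrow> u j i \<in> carrier R" and
      vu: "\<And>j i. j < k \<Longrightarrow> i < r \<Longrightarrow> v j i = J +> u j i" unfolding u_def using rep vc by blast+
    have uv: "vecs R r (u j)" if "j < k" for j unfolding vecs_def using uc that by blast
    have "\<forall>j<k. u j \<in> P"
    proof (intro allI impI)
      fix j assume j: "j < k"
      have "J +> lc xs (u j) = (\<Oplus>\<^bsub>R Quot J\<^esub>i\<in>{..<r}. (J +> xs ! i) \<otimes>\<^bsub>R Quot J\<^esub> (J +> u j i))"
        using lc_pi[OF uv[OF j]] .
      also have "\<dots> = (\<Oplus>\<^bsub>R Quot J\<^esub>i\<in>{..<r}. (J +> xs ! i) \<otimes>\<^bsub>R Quot J\<^esub> v j i)"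
        using vu[OF j] vc[OF j] xi pi_carr by (intro Q.finsum_cong') (auto simp: Pi_def)
      finally have "J +> lc xs (u j) \<in> ideal_sq (R Quot J) Mq" using v(1) j unfolding K_def by simp
      moreover have "lc xs (u j) \<in> carrier R" using lc_closed[OF xsc] uc j unfolding r_def by blast
      ultimately have "lc xs (u j) \<in> U" using sqQ_mem by blast
      then show "u j \<in> P" unfolding P_def using uv j by blast
    qed
    moreover have "indep_mod R M r u k"
      unfolding indep_mod_def
    proof (intro allI impI)
      fix c j assume c: "(\<forall>j<k. c j \<in> carrier R) \<and> (\<forall>i<r. (\<Oplus>j\<in>{..<k}. c j \<otimes> u j i) \<in> M)" and j: "j < k"
      have "(\<forall>j<k. J +> c j \<in> carrier (R Quot J)) \<and>
        (\<forall>i<r. (\<Oplus>\<^bsub>R Quot J\<^esub>j\<in>{..<k}. (J +> c j) \<otimes>\<^bsub>R Quot J\<^esub> v j i) \<in> Mq)"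
      proof (intro conjI allI impI)
        show "J +> c j \<in> carrier (R Quot J)" if "j < k" for j using pi_carr c that by blast
        fix i assume i: "i < r"
        have "(\<Oplus>\<^bsub>R Quot J\<^esub>j\<in>{..<k}. (J +> c j) \<otimes>\<^bsub>R Quot J\<^esub> v j i)
            = (\<Oplus>\<^bsub>R Quot J\<^esub>j\<in>{..<k}. (J +> c j) \<otimes>\<^bsub>R Quot J\<^esub> (J +> u j i))"
          using vu i c uc pi_carr by (intro Q.finsum_cong') (auto simp: Pi_def)
        also have "\<dots> = J +> (\<Oplus>j\<in>{..<k}. c j \<otimes> u j i)"
          by (rule pi_fs[symmetric]) (use c uc i in auto)
        finally show "(\<Oplus>\<^bsub>R Quot J\<^esub>j\<in>{..<k}. (J +> c j) \<otimes>\<^bsub>R Quot J\<^esub> v j i) \<in> Mq"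
          using Mq_mem c i uc by (auto intro!: finsum_closed)
      qed
      then have "\<forall>j<k. J +> c j \<in> Mq"
        using v(2)[unfolded indep_mod_def, THEN spec[where x="\<lambda>j. J +> c j"], THEN mp] by simp
      then have "J +> c j \<in> Mq" using j by blast
      then show "c j \<in> M" using Mq_mem c j by blast
    qed
    ultimately show "\<exists>u. (\<forall>j<k. u j \<in> P) \<and> indep_mod R M r u k" by blast
  next
    assume "\<exists>u. (\<forall>j<k. u j \<in> P) \<and> indep_mod R M r u k"
    then obtain u where u: "\<forall>j<k. u j \<in> P" "indep_mod R M r u k" by blast
    have uc: "\<And>j i. j < k \<Longrightarrow> i < r \<Longrightarrow> u j i \<in> carrier R" using u(1) unfolding P_def vecs_def by blast
    define v where "v j i = J +> u j i" for j i
    have "\<forall>j<k. v j \<in> K"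
    proof (intro allI impI)
      fix j assume j: "j < k"
      have "(\<Oplus>\<^bsub>R Quot J\<^esub>i\<in>{..<r}. (J +> xs ! i) \<otimes>\<^bsub>R Quot J\<^esub> v j i) = J +> lc xs (u j)"
        unfolding v_def using lc_pi[of "u j"] u(1) j unfolding P_def by simp
      moreover have "lc xs (u j) \<in> U" using u(1) j unfolding P_def by blast
      moreover have "lc xs (u j) \<in> carrier R" using lc_closed[OF xsc] uc j unfolding r_def by blast
      ultimately show "v j \<in> K" unfolding K_def v_def using sqQ_mem pi_carr uc j by auto
    qed
    moreover have "indep_mod (R Quot J) Mq r v k"
      unfolding indep_mod_def
    proof (intro allI impI)
      fix c j assume c: "(\<forall>j<k. c j \<in> carrier (R Quot J)) \<and>
          (\<forall>i<r. (\<Oplus>\<^bsub>R Quot J\<^esub>j\<in>{..<k}. c j \<otimes>\<^bsub>R Quot J\<^esub> v j i) \<in> Mq)" and j: "j < k"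
      define c' where "c' j = rep (c j)" for j
      have c'c: "\<And>j. j < k \<Longrightarrow> c' j \<in> carrier R" and cc': "\<And>j. j < k \<Longrightarrow> c j = J +> c' j"
        unfolding c'_def using rep c by blast+
      have "(\<forall>j<k. c' j \<in> carrier R) \<and> (\<forall>i<r. (\<Oplus>j\<in>{..<k}. c' j \<otimes> u j i) \<in> M)"
      proof (intro conjI allI impI)
        show "c' j \<in> carrier R" if "j < k" for j using c'c that by blast
        fix i assume i: "i < r"
        have "J +> (\<Oplus>j\<in>{..<k}. c' j \<otimes> u j i) = (\<Oplus>\<^bsub>R Quot J\<^esub>j\<in>{..<k}. (J +> c' j) \<otimes>\<^bsub>R Quot J\<^esub> (J +> u j i))"
          by (rule pi_fs) (use c'c uc i in auto)
        also have "\<dots> = (\<Oplus>\<^bsub>R Quot J\<^esub>j\<in>{..<k}. c j \<otimes>\<^bsub>R Quot J\<^esub> v j i)"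
          unfolding v_def using cc' c'c uc i pi_carr by (intro Q.finsum_cong') (auto simp: Pi_def)
        finally have "J +> (\<Oplus>j\<in>{..<k}. c' j \<otimes> u j i) \<in> Mq" using c i by simp
        then show "(\<Oplus>j\<in>{..<k}. c' j \<otimes> u j i) \<in> M" using Mq_mem c'c uc i by (auto intro!: finsum_closed)
      qed
      then have "\<forall>j<k. c' j \<in> M"
        using u(2)[unfolded indep_mod_def, THEN spec[where x="c'"], THEN mp] by simp
      then have "c' j \<in> M" using j by blast
      then show "c j \<in> Mq" using cc'[OF j] Mq_mem c'c[OF j] by simp
    qed
    ultimately show "\<exists>v. (\<forall>j<k. v j \<in> K) \<and> indep_mod (R Quot J) Mq r v k" by blast
  qed
  have "rd R (R Quot J) ((+>) J) = (GREATEST k. \<exists>v. (\<forall>j<k. v j \<in> K) \<and> indep_mod (R Quot J) Mq r v k)"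
    unfolding rd_def rd_kernel_def Let_def xsdef[symmetric] maxQ K_def r_def by simp
  also have "\<dots> = (GREATEST k. \<exists>u. (\<forall>j<k. u j \<in> P) \<and> indep_mod R M r u k)" using eqv by simp
  finally show ?thesis unfolding dimS_def P_def r_def .
qed

end


context cring
begin

lemma fs_extend:
  assumes "finite B" "A \<subseteq> B" "f \<in> B \<rightarrow> carrier R" "\<And>i. i \<in> B - A \<Longrightarrow> f i = \<zero>"
  shows "(\<Oplus>i\<in>B. f i) = (\<Oplus>i\<in>A. f i)"
  using add.finprod_mono_neutral_cong_left[of B A f f] assms by (simp add: Pi_def)

lemma lc_sum:
  assumes L: "finite L" and ys: "set ys \<subseteq> carrier R" and b: "\<And>l. l \<in> L \<Longrightarrow> \<beta> l \<in> carrier R"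
    and g: "\<And>l j. l \<in> L \<Longrightarrow> j < length ys \<Longrightarrow> \<gamma> l j \<in> carrier R"
  shows "(\<Oplus>l\<in>L. \<beta> l \<otimes> lc ys (\<gamma> l)) = lc ys (\<lambda>j. \<Oplus>l\<in>L. \<beta> l \<otimes> \<gamma> l j)"
proof -
  have "(\<Oplus>l\<in>L. \<beta> l \<otimes> lc ys (\<gamma> l)) = (\<Oplus>l\<in>L. \<Oplus>j\<in>{..<length ys}. ys ! j \<otimes> (\<beta> l \<otimes> \<gamma> l j))"
  proof (intro finsum_cong')
    fix l assume l: "l \<in> L"
    show "\<beta> l \<otimes> lc ys (\<gamma> l) = (\<Oplus>j\<in>{..<length ys}. ys ! j \<otimes> (\<beta> l \<otimes> \<gamma> l j))"
      using lc_smult[OF ys, of "\<gamma> l" "\<beta> l"] b[OF l] g[OF l] unfolding lc_def by simp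
  qed (use ys b g in \<open>auto simp: Pi_def intro!: finsum_closed\<close>)
  also have "\<dots> = (\<Oplus>j\<in>{..<length ys}. \<Oplus>l\<in>L. ys ! j \<otimes> (\<beta> l \<otimes> \<gamma> l j))"
    by (rule fs_swap) (use L ys b g in auto)
  also have "\<dots> = lc ys (\<lambda>j. \<Oplus>l\<in>L. \<beta> l \<otimes> \<gamma> l j)"
    unfolding lc_def
  proof (intro finsum_cong')
    fix j assume j: "j \<in> {..<length ys}"
    show "(\<Oplus>l\<in>L. ys ! j \<otimes> (\<beta> l \<otimes> \<gamma> l j)) = ys ! j \<otimes> (\<Oplus>l\<in>L. \<beta> l \<otimes> \<gamma> l j)"
      using j ys b g L by (subst finsum_rdistr) (auto simp: Pi_def)
  qed (use ys b g in \<open>auto simp: Pi_def intro!: finsum_closed\<close>)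
  finally show ?thesis .
qed

lemma alg10: "e1 \<in> carrier R \<Longrightarrow> e2 \<in> carrier R \<Longrightarrow> S1 \<in> carrier R \<Longrightarrow> S2 \<in> carrier R \<Longrightarrow>
  (e1 \<oplus> e2) \<ominus> (S1 \<oplus> S2) = (e1 \<ominus> S1) \<oplus> (e2 \<ominus> S2)" by algebra

end

context lring
begin

lemma lc_sq: "set ys \<subseteq> M \<Longrightarrow> (\<And>j. j < length ys \<Longrightarrow> c j \<in> M) \<Longrightarrow> lc ys c \<in> ideal_sq R M"
  unfolding lc_def by (rule ideal_finsum[OF sq_ideal]) (auto intro: sq_prod)

lemma span_gens:
  assumes ys: "set ys \<subseteq> M" "Idl (set ys) = M"
    and minl: "\<forall>zs. set zs \<subseteq> M \<and> Idl (set zs) = M \<longrightarrow> length ys \<le> length zs"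
    and g: "\<forall>l<d. vecs R (length ys) (\<gamma> l)"
    and Gen: "Gen \<subseteq> carrier R"
    and hX: "\<forall>x\<in>Gen. \<exists>\<beta>. (\<forall>l<d. \<beta> l \<in> carrier R) \<and> x \<ominus> (\<Oplus>l\<in>{..<d}. \<beta> l \<otimes> lc ys (\<gamma> l)) \<in> ideal_sq R M"
    and w: "vecs R (length ys) w" "lc ys w \<in> set_add R (Idl Gen) (ideal_sq R M)"
  shows "spanS R M (length ys) {..<d} \<gamma> w"
proof -
  have ysc: "set ys \<subseteq> carrier R" using ys M_carr by blast
  have gc: "\<And>l j. l < d \<Longrightarrow> j < length ys \<Longrightarrow> \<gamma> l j \<in> carrier R" using g unfolding vecs_def by blast
  define G where "G l = lc ys (\<gamma> l)" for l
  have Gc: "\<And>l. l < d \<Longrightarrow> G l \<in> carrier R" unfolding G_def using lc_closed[OF ysc] gc by blast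
  define S where "S \<beta> = (\<Oplus>l\<in>{..<d}. \<beta> l \<otimes> G l)" for \<beta>
  have Sc: "\<And>\<beta>. (\<forall>l<d. \<beta> l \<in> carrier R) \<Longrightarrow> S \<beta> \<in> carrier R" unfolding S_def using Gc by (auto intro!: finsum_closed)
  define E where "E = {e \<in> carrier R. \<exists>\<beta>. (\<forall>l<d. \<beta> l \<in> carrier R) \<and> e \<ominus> S \<beta> \<in> ideal_sq R M}"
  have sqc: "\<And>x. x \<in> ideal_sq R M \<Longrightarrow> x \<in> carrier R" using sq_sub M_carr by blast
  have S0: "S (\<lambda>_. \<zero>) = \<zero>"
  proof -
    have "S (\<lambda>_. \<zero>) = (\<Oplus>l\<in>{..<d}. \<zero>)" unfolding S_def using Gc by (intro finsum_cong') auto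
    then show ?thesis by simp
  qed
  have sqE: "ideal_sq R M \<subseteq> E"
  proof
    fix x assume x: "x \<in> ideal_sq R M"
    have "x \<ominus> S (\<lambda>_. \<zero>) = x" unfolding S0 using sqc[OF x] by (simp add: a_minus_def)
    then show "x \<in> E" unfolding E_def using x sqc[OF x] by (intro CollectI conjI exI[of _ "\<lambda>_. \<zero>"]) auto
  qed
  have Eid: "ideal E R"
  proof (rule ideal_crit)
    show "E \<subseteq> carrier R" unfolding E_def by blast
    show "\<zero> \<in> E" using sqE ideal_zero[OF sq_ideal] by blast
    show "a \<oplus> b \<in> E" if ab: "a \<in> E" "b \<in> E" for a b
    proof -
      obtain \<beta>1 \<beta>2 where b: "\<forall>l<d. \<beta>1 l \<in> carrier R" "a \<ominus> S \<beta>1 \<in> ideal_sq R M"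
         "\<forall>l<d. \<beta>2 l \<in> carrier R" "b \<ominus> S \<beta>2 \<in> ideal_sq R M" "a \<in> carrier R" "b \<in> carrier R"
        using ab unfolding E_def by blast
      have "S (\<lambda>l. \<beta>1 l \<oplus> \<beta>2 l) = (\<Oplus>l\<in>{..<d}. \<beta>1 l \<otimes> G l \<oplus> \<beta>2 l \<otimes> G l)"
        unfolding S_def using b Gc by (intro finsum_cong') (auto simp: l_distr)
      also have "\<dots> = S \<beta>1 \<oplus> S \<beta>2" unfolding S_def using b Gc by (subst finsum_addf) auto
      finally have e: "S (\<lambda>l. \<beta>1 l \<oplus> \<beta>2 l) = S \<beta>1 \<oplus> S \<beta>2" .
      have "(a \<oplus> b) \<ominus> S (\<lambda>l. \<beta>1 l \<oplus> \<beta>2 l) = (a \<ominus> S \<beta>1) \<oplus> (b \<ominus> S \<beta>2)"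
        unfolding e by (rule alg10[OF b(5) b(6) Sc[OF b(1)] Sc[OF b(3)]])
      then have "(a \<oplus> b) \<ominus> S (\<lambda>l. \<beta>1 l \<oplus> \<beta>2 l) \<in> ideal_sq R M" using ideal_add[OF sq_ideal] b by simp
      moreover have "\<forall>l<d. \<beta>1 l \<oplus> \<beta>2 l \<in> carrier R" using b by simp
      ultimately show ?thesis unfolding E_def using b
        by (intro CollectI conjI exI[of _ "\<lambda>l. \<beta>1 l \<oplus> \<beta>2 l"]) simp_all
    qed
    show "x \<otimes> a \<in> E" if ax: "a \<in> E" "x \<in> carrier R" for a x
    proof -
      obtain \<beta> where b: "\<forall>l<d. \<beta> l \<in> carrier R" "a \<ominus> S \<beta> \<in> ideal_sq R M" "a \<in> carrier R"
        using ax unfolding E_def by blast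
      have "S (\<lambda>l. x \<otimes> \<beta> l) = (\<Oplus>l\<in>{..<d}. x \<otimes> (\<beta> l \<otimes> G l))"
        unfolding S_def using b Gc ax by (intro finsum_cong') (auto simp: m_assoc)
      also have "\<dots> = x \<otimes> S \<beta>" unfolding S_def using b Gc ax by (subst finsum_rdistr) auto
      finally have e: "S (\<lambda>l. x \<otimes> \<beta> l) = x \<otimes> S \<beta>" .
      have "x \<otimes> a \<ominus> S (\<lambda>l. x \<otimes> \<beta> l) = x \<otimes> (a \<ominus> S \<beta>)" unfolding e using rdiff b ax Sc by simp
      then have "x \<otimes> a \<ominus> S (\<lambda>l. x \<otimes> \<beta> l) \<in> ideal_sq R M" using ideal.I_l_closed[OF sq_ideal b(2) ax(2)] by simp
      moreover have "\<forall>l<d. x \<otimes> \<beta> l \<in> carrier R" using b ax by simp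
      ultimately show ?thesis unfolding E_def using b ax
        by (intro CollectI conjI exI[of _ "\<lambda>l. x \<otimes> \<beta> l"]) simp_all
    qed
  qed
  have XE: "Gen \<subseteq> E" unfolding E_def S_def G_def using hX Gen by blast
  have "set_add R (Idl Gen) (ideal_sq R M) \<subseteq> E"
  proof
    fix x assume "x \<in> set_add R (Idl Gen) (ideal_sq R M)"
    then obtain a b where ab: "a \<in> Idl Gen" "b \<in> ideal_sq R M" "x = a \<oplus> b" unfolding set_add_mem by blast
    have "a \<in> E" using genideal_minimal[OF Eid XE] ab by blast
    then show "x \<in> E" using ab sqE ideal_add[OF Eid] by blast
  qed
  then obtain \<beta> where \<beta>: "\<forall>l<d. \<beta> l \<in> carrier R" "lc ys w \<ominus> S \<beta> \<in> ideal_sq R M" using w by (auto simp: E_def)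
  have wc: "\<And>j. j < length ys \<Longrightarrow> w j \<in> carrier R" using w unfolding vecs_def by blast
  have sc: "\<And>j. j < length ys \<Longrightarrow> (\<Oplus>l\<in>{..<d}. \<beta> l \<otimes> \<gamma> l j) \<in> carrier R" using \<beta> gc by (auto intro!: finsum_closed)
  have "S \<beta> = lc ys (\<lambda>j. \<Oplus>l\<in>{..<d}. \<beta> l \<otimes> \<gamma> l j)"
    unfolding S_def G_def by (rule lc_sum) (use ysc \<beta> gc in auto)
  then have "lc ys w \<ominus> S \<beta> = lc ys (\<lambda>j. w j \<ominus> (\<Oplus>l\<in>{..<d}. \<beta> l \<otimes> \<gamma> l j))"
    using lc_minus[OF ysc] wc sc by simp
  then have "\<forall>j<length ys. w j \<ominus> (\<Oplus>l\<in>{..<d}. \<beta> l \<otimes> \<gamma> l j) \<in> M"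
    using key_lemma[OF ys minl, of "\<lambda>j. w j \<ominus> (\<Oplus>l\<in>{..<d}. \<beta> l \<otimes> \<gamma> l j)"] \<beta>(2) wc sc by simp
  then show ?thesis unfolding spanS_def using \<beta> by auto
qed

end


locale lhom = A: lring A m + B: lring B n for A (structure) and m and B (structure) and n +
  fixes \<phi> assumes hom: "\<phi> \<in> ring_hom A B" and loc: "\<phi> ` m \<subseteq> n"
begin

lemma phi_cr: "ring_hom_cring A B \<phi>"
  by (rule ring_hom_cringI[OF A.is_cring B.is_cring hom])

sublocale P: ring_hom_cring A B \<phi> by (rule phi_cr)

lemma phi_m: "a \<in> m \<Longrightarrow> \<phi> a \<in> n" using loc by blast

lemma phi_minus: "a \<in> carrier A \<Longrightarrow> b \<in> carrier A \<Longrightarrow> \<phi> (a \<ominus> b) = \<phi> a \<ominus>\<^bsub>B\<^esub> \<phi> b"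
  by (simp add: A.minus_eq B.minus_eq)

lemma phi_sq: "a \<in> ideal_sq A m \<Longrightarrow> \<phi> a \<in> ideal_sq B n"
proof -
  define V where "V = {a \<in> carrier A. \<phi> a \<in> ideal_sq B n}"
  have V: "ideal V A" unfolding V_def
    using ring_hom_ring.ideal_vimage[OF ring_hom_ringI2[OF A.ring_axioms B.ring_axioms hom] B.sq_ideal] .
  have "{a \<otimes> b | a b. a \<in> m \<and> b \<in> m} \<subseteq> V"
  proof
    fix z assume "z \<in> {a \<otimes> b | a b. a \<in> m \<and> b \<in> m}"
    then obtain a b where ab: "a \<in> m" "b \<in> m" "z = a \<otimes> b" by blast
    have "\<phi> z = \<phi> a \<otimes>\<^bsub>B\<^esub> \<phi> b" using ab A.M_carr by simp
    then have "\<phi> z \<in> ideal_sq B n" using B.sq_prod[OF phi_m[OF ab(1)] phi_m[OF ab(2)]] by simp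
    then show "z \<in> V" unfolding V_def using ab A.M_carr by simp
  qed
  then have "ideal_sq A m \<subseteq> V" unfolding ideal_sq_def using A.genideal_minimal[OF V] by blast
  then show "a \<in> ideal_sq A m \<Longrightarrow> \<phi> a \<in> ideal_sq B n" unfolding V_def by blast
qed

lemma phi_fs:
  assumes "finite S" "\<And>i. i \<in> S \<Longrightarrow> f i \<in> carrier A" "\<And>i. i \<in> S \<Longrightarrow> g i \<in> carrier A"
  shows "\<phi> (\<Oplus>i\<in>S. f i \<otimes> g i) = (\<Oplus>\<^bsub>B\<^esub>i\<in>S. \<phi> (f i) \<otimes>\<^bsub>B\<^esub> \<phi> (g i))"
proof -
  have "\<phi> (\<Oplus>i\<in>S. f i \<otimes> g i) = (\<Oplus>\<^bsub>B\<^esub>i\<in>S. \<phi> (f i \<otimes> g i))"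
    using P.hom_finsum[of "\<lambda>i. f i \<otimes> g i" S] assms by (auto simp: Pi_def comp_def)
  also have "\<dots> = (\<Oplus>\<^bsub>B\<^esub>i\<in>S. \<phi> (f i) \<otimes>\<^bsub>B\<^esub> \<phi> (g i))"
    using assms by (intro B.finsum_cong') (auto simp: Pi_def)
  finally show ?thesis .
qed

lemma phi_ev: "\<phi> (ev A t i) = ev B t i" unfolding ev_def by simp

lemma flat:
  assumes u: "\<forall>l<d. vecs A r (u l)" "indep_mod A m r u d"
    and c: "\<forall>l<d. c l \<in> carrier B" and e: "\<forall>i<r. (\<Oplus>\<^bsub>B\<^esub>l\<in>{..<d}. c l \<otimes>\<^bsub>B\<^esub> \<phi> (u l i)) \<in> n"
  shows "\<forall>l<d. c l \<in> n"
proof (rule ccontr)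
  assume "\<not> (\<forall>l<d. c l \<in> n)"
  then obtain l0 where l0: "l0 < d" "c l0 \<notin> n" by blast
  have "card {..<d} \<le> r" by (rule A.indep_le_r) (use u in \<open>auto simp: indep_mod_eq\<close>)
  then have dr: "d \<le> r" by simp
  obtain u' where u': "\<forall>j<d. u' j = u j" "\<forall>j<r. vecs A r (u' j)" "indep_mod A m r u' r"
    using A.extend_indep[OF u dr order.refl] by blast
  have u'c: "\<And>l i. l < r \<Longrightarrow> i < r \<Longrightarrow> u' l i \<in> carrier A" using u'(2) unfolding vecs_def by blast
  define g where "g l i = \<phi> (u' l i)" for l i
  have gv: "\<forall>l\<in>{..<r}. vecs B r (g l)" unfolding g_def vecs_def using u'c by auto
  have sp: "spanS B n r {..<r} g (ev B t)" if t: "t < r" for t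
  proof -
    obtain V where V: "\<forall>l\<in>{..<r}. V l \<in> carrier A" "\<forall>i<r. ev A t i \<ominus> (\<Oplus>l\<in>{..<r}. V l \<otimes> u' l i) \<in> m"
      using A.full_span[OF u'(2,3) A.ev_vecs] unfolding spanS_def by blast
    show ?thesis unfolding spanS_def
    proof (intro exI[of _ "\<lambda>l. \<phi> (V l)"] conjI ballI allI impI)
      show "\<phi> (V l) \<in> carrier B" if "l \<in> {..<r}" for l using V that by simp
      fix i assume i: "i < r"
      have evc: "ev A t i \<in> carrier A" unfolding ev_def by simp
      have sc: "(\<Oplus>l\<in>{..<r}. V l \<otimes> u' l i) \<in> carrier A" using V u'c i by (auto intro!: A.finsum_closed)
      have "\<phi> (ev A t i \<ominus> (\<Oplus>l\<in>{..<r}. V l \<otimes> u' l i)) = ev B t i \<ominus>\<^bsub>B\<^esub> (\<Oplus>\<^bsub>B\<^esub>l\<in>{..<r}. \<phi> (V l) \<otimes>\<^bsub>B\<^esub> g l i)"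
        unfolding phi_minus[OF evc sc] phi_ev g_def using V u'c i by (subst phi_fs) auto
      then show "ev B t i \<ominus>\<^bsub>B\<^esub> (\<Oplus>\<^bsub>B\<^esub>l\<in>{..<r}. \<phi> (V l) \<otimes>\<^bsub>B\<^esub> g l i) \<in> n"
        using phi_m[OF V(2)[rule_format, OF i]] by simp
    qed
  qed
  define c' where "c' l = (if l < d then c l else \<zero>\<^bsub>B\<^esub>)" for l
  have nind: "\<not> indepS B n r g {..<r}"
  proof
    assume ind: "indepS B n r g {..<r}"
    have "(\<forall>j\<in>{..<r}. c' j \<in> carrier B) \<and> (\<forall>i<r. (\<Oplus>\<^bsub>B\<^esub>j\<in>{..<r}. c' j \<otimes>\<^bsub>B\<^esub> g j i) \<in> n)"
    proof (intro conjI ballI allI impI)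
      show "c' j \<in> carrier B" if "j \<in> {..<r}" for j unfolding c'_def using c by auto
      fix i assume i: "i < r"
      have "(\<Oplus>\<^bsub>B\<^esub>j\<in>{..<r}. c' j \<otimes>\<^bsub>B\<^esub> g j i) = (\<Oplus>\<^bsub>B\<^esub>j\<in>{..<d}. c' j \<otimes>\<^bsub>B\<^esub> g j i)"
        by (rule B.fs_extend) (use dr c u'c i in \<open>auto simp: c'_def g_def Pi_def\<close>)
      also have "\<dots> = (\<Oplus>\<^bsub>B\<^esub>l\<in>{..<d}. c l \<otimes>\<^bsub>B\<^esub> \<phi> (u l i))"
        using c u u'(1) u'c dr i unfolding c'_def g_def vecs_def by (intro B.finsum_cong') (auto simp: Pi_def)
      finally show "(\<Oplus>\<^bsub>B\<^esub>j\<in>{..<r}. c' j \<otimes>\<^bsub>B\<^esub> g j i) \<in> n" using e i by simp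
    qed
    then have "c' l0 \<in> n" using ind l0 dr unfolding indepS_def by auto
    then show False using l0 unfolding c'_def by simp
  qed
  define P where "P = {a. \<exists>t<r. a = ev B t}"
  have P: "P \<subseteq> {a. vecs B r a}" unfolding P_def using B.ev_vecs by auto
  have "dimS B n r P < card {..<r}"
    by (rule B.dep_dim[OF P _ gv nind]) (use sp in \<open>auto simp: P_def\<close>)
  moreover have "r \<le> dimS B n r P"
    by (rule B.dim_ge[OF P, of r "ev B"]) (use B.ev_indep[of r r] in \<open>auto simp: P_def indep_mod_eq\<close>)
  ultimately show False by simp
qed

end


context lhom
begin

lemma I_sub_U: "ideal I A \<Longrightarrow> I \<subseteq> set_add A I (ideal_sq A m)"
proof
  fix j assume I: "ideal I A" and j: "j \<in> I"
  have "j = j \<oplus> \<zero>" using j ideal.Icarr[OF I] by simp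
  then show "j \<in> set_add A I (ideal_sq A m)" unfolding set_add_mem using j ideal_zero[OF A.sq_ideal] by blast
qed

lemma main1:
  assumes xs: "set xs \<subseteq> m" "Idl (set xs) = m"
    and ys: "set ys \<subseteq> n" "Idl\<^bsub>B\<^esub> (set ys) = n"
    and minl: "\<forall>zs. set zs \<subseteq> n \<and> Idl\<^bsub>B\<^esub> (set zs) = n \<longrightarrow> length ys \<le> length zs"
    and I: "ideal I A" "\<one> \<notin> I"
  shows "dimS B n (length ys) {w. vecs B (length ys) w \<and> B.lc ys w \<in> set_add B (Idl\<^bsub>B\<^esub> (\<phi> ` I)) (ideal_sq B n)}
      \<le> dimS A m (length xs) {a. vecs A (length xs) a \<and> A.lc xs a \<in> set_add A I (ideal_sq A m)}"
proof -
  define r where "r = length xs"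
  define s where "s = length ys"
  define PA where "PA = {a. vecs A r a \<and> A.lc xs a \<in> set_add A I (ideal_sq A m)}"
  define PB where "PB = {w. vecs B s w \<and> B.lc ys w \<in> set_add B (Idl\<^bsub>B\<^esub> (\<phi> ` I)) (ideal_sq B n)}"
  have xsc: "set xs \<subseteq> carrier A" using xs A.M_carr by blast
  have ysc: "set ys \<subseteq> carrier B" using ys B.M_carr by blast
  have PAv: "PA \<subseteq> {a. vecs A r a}" unfolding PA_def by blast
  have PBv: "PB \<subseteq> {a. vecs B s a}" unfolding PB_def by blast
  define d where "d = dimS A m r PA"
  obtain u where u: "\<forall>j<d. u j \<in> PA" "indep_mod A m r u d" using A.dim_ex[OF PAv] unfolding d_def by blast
  have uc: "\<And>l i. l < d \<Longrightarrow> i < r \<Longrightarrow> u l i \<in> carrier A" using u(1) unfolding PA_def vecs_def by blast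
  define z where "z l = A.lc xs (u l)" for l
  have zm: "\<And>l. l < d \<Longrightarrow> z l \<in> m" unfolding z_def
    by (rule A.lc_in_ideal[OF A.M_ideal xs(1)]) (use uc in \<open>auto simp: r_def\<close>)
  have zc: "\<And>l. l < d \<Longrightarrow> z l \<in> carrier A" using zm A.M_carr by blast
  have "\<forall>l. \<exists>\<gamma>. l < d \<longrightarrow> (vecs B s \<gamma> \<and> \<phi> (z l) = B.lc ys \<gamma>)"
  proof (intro allI)
    fix l
    show "\<exists>\<gamma>. l < d \<longrightarrow> (vecs B s \<gamma> \<and> \<phi> (z l) = B.lc ys \<gamma>)"
    proof (cases "l < d")
      case True
      then have "\<phi> (z l) \<in> Idl\<^bsub>B\<^esub> (set ys)" using phi_m[OF zm[OF True]] ys(2) by simp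
      then show ?thesis unfolding B.genideal_lc[OF ysc] vecs_def s_def by blast
    qed simp
  qed
  then obtain \<gamma> where \<gamma>: "\<And>l. l < d \<Longrightarrow> vecs B s (\<gamma> l) \<and> \<phi> (z l) = B.lc ys (\<gamma> l)" by metis
  have "\<forall>w\<in>PB. spanS B n s {..<d} \<gamma> w"
  proof
    fix w assume w: "w \<in> PB"
    show "spanS B n s {..<d} \<gamma> w" unfolding s_def
    proof (rule B.span_gens[OF ys minl])
      show "\<forall>l<d. vecs B (length ys) (\<gamma> l)" using \<gamma> s_def by blast
      show "\<phi> ` I \<subseteq> carrier B" using ideal.Icarr[OF I(1)] by auto
      show "vecs B (length ys) w" "B.lc ys w \<in> set_add B (Idl\<^bsub>B\<^esub> (\<phi> ` I)) (ideal_sq B n)"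
        using w unfolding PB_def s_def by auto
      show "\<forall>x\<in>\<phi> ` I. \<exists>\<beta>. (\<forall>l<d. \<beta> l \<in> carrier B) \<and>
          x \<ominus>\<^bsub>B\<^esub> (\<Oplus>\<^bsub>B\<^esub>l\<in>{..<d}. \<beta> l \<otimes>\<^bsub>B\<^esub> B.lc ys (\<gamma> l)) \<in> ideal_sq B n"
      proof
        fix x assume "x \<in> \<phi> ` I"
        then obtain a where a: "a \<in> I" "x = \<phi> a" by blast
        have am: "a \<in> m" using A.proper_sub_M[OF I] a by blast
        have ac: "a \<in> carrier A" using am A.M_carr by blast
        obtain \<alpha> where \<alpha>: "\<forall>i<r. \<alpha> i \<in> carrier A" "a = A.lc xs \<alpha>"
          using am xs(2) A.genideal_lc[OF xsc] unfolding r_def by blast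
        have "\<alpha> \<in> PA" unfolding PA_def vecs_def using \<alpha> a I_sub_U[OF I(1)] by auto
        then have "spanS A m r {..<d} u \<alpha>" using A.dim_span[OF PAv u[unfolded d_def]] unfolding d_def by blast
        then obtain \<beta> where \<beta>: "\<forall>l\<in>{..<d}. \<beta> l \<in> carrier A"
          "\<forall>i<r. \<alpha> i \<ominus> (\<Oplus>l\<in>{..<d}. \<beta> l \<otimes> u l i) \<in> m" unfolding spanS_def by blast
        have sc: "\<And>i. i < r \<Longrightarrow> (\<Oplus>l\<in>{..<d}. \<beta> l \<otimes> u l i) \<in> carrier A"
          using \<beta> uc by (auto intro!: A.finsum_closed)
        have e1: "(\<Oplus>l\<in>{..<d}. \<beta> l \<otimes> z l) = A.lc xs (\<lambda>i. \<Oplus>l\<in>{..<d}. \<beta> l \<otimes> u l i)"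
          unfolding z_def by (rule A.lc_sum) (use xsc \<beta> uc in \<open>auto simp: r_def\<close>)
        have "a \<ominus> (\<Oplus>l\<in>{..<d}. \<beta> l \<otimes> z l) = A.lc xs (\<lambda>i. \<alpha> i \<ominus> (\<Oplus>l\<in>{..<d}. \<beta> l \<otimes> u l i))"
          unfolding e1 \<alpha>(2) by (rule A.lc_minus[OF xsc]) (use \<alpha> sc in \<open>auto simp: r_def\<close>)
        also have "\<dots> \<in> ideal_sq A m" by (rule A.lc_sq[OF xs(1)]) (use \<beta> in \<open>auto simp: r_def\<close>)
        finally have sq: "a \<ominus> (\<Oplus>l\<in>{..<d}. \<beta> l \<otimes> z l) \<in> ideal_sq A m" .
        have zsc: "(\<Oplus>l\<in>{..<d}. \<beta> l \<otimes> z l) \<in> carrier A" using \<beta> zc by (auto intro!: A.finsum_closed)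
        have "\<phi> (a \<ominus> (\<Oplus>l\<in>{..<d}. \<beta> l \<otimes> z l)) = \<phi> a \<ominus>\<^bsub>B\<^esub> (\<Oplus>\<^bsub>B\<^esub>l\<in>{..<d}. \<phi> (\<beta> l) \<otimes>\<^bsub>B\<^esub> \<phi> (z l))"
          using phi_minus[OF ac zsc] phi_fs[of "{..<d}" \<beta> z] \<beta> zc by simp
        also have "(\<Oplus>\<^bsub>B\<^esub>l\<in>{..<d}. \<phi> (\<beta> l) \<otimes>\<^bsub>B\<^esub> \<phi> (z l)) = (\<Oplus>\<^bsub>B\<^esub>l\<in>{..<d}. \<phi> (\<beta> l) \<otimes>\<^bsub>B\<^esub> B.lc ys (\<gamma> l))"
          using \<gamma> \<beta> B.lc_closed[OF ysc] by (intro B.finsum_cong') (auto simp: Pi_def vecs_def s_def)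
        finally have "x \<ominus>\<^bsub>B\<^esub> (\<Oplus>\<^bsub>B\<^esub>l\<in>{..<d}. \<phi> (\<beta> l) \<otimes>\<^bsub>B\<^esub> B.lc ys (\<gamma> l)) \<in> ideal_sq B n"
          using phi_sq[OF sq] a by simp
        moreover have "\<forall>l<d. \<phi> (\<beta> l) \<in> carrier B" using \<beta> by simp
        ultimately show "\<exists>\<beta>. (\<forall>l<d. \<beta> l \<in> carrier B) \<and>
          x \<ominus>\<^bsub>B\<^esub> (\<Oplus>\<^bsub>B\<^esub>l\<in>{..<d}. \<beta> l \<otimes>\<^bsub>B\<^esub> B.lc ys (\<gamma> l)) \<in> ideal_sq B n"
          by (intro exI[of _ "\<lambda>l. \<phi> (\<beta> l)"] conjI)
      qed
    qed
  qed
  then have "dimS B n s PB \<le> card {..<d}"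
    by (intro B.dim_le_span[OF PBv]) (use \<gamma> in auto)
  then show ?thesis unfolding d_def PA_def PB_def r_def s_def by simp
qed

end


context lhom
begin

lemma main2:
  assumes xs: "set xs \<subseteq> m" "Idl (set xs) = m"
    and ys: "set ys \<subseteq> n" "Idl\<^bsub>B\<^esub> (set ys) = n"
    and ys': "set (map \<phi> xs @ zs) \<subseteq> n" "Idl\<^bsub>B\<^esub> (set (map \<phi> xs @ zs)) = n"
    "\<forall>zs'. set zs' \<subseteq> n \<and> Idl\<^bsub>B\<^esub> (set zs') = n \<longrightarrow> length (map \<phi> xs @ zs) \<le> length zs'"
    and I: "ideal I A" "\<one> \<notin> I"
  shows "dimS A m (length xs) {a. vecs A (length xs) a \<and> A.lc xs a \<in> set_add A I (ideal_sq A m)}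
    \<le> dimS B n (length ys) {w. vecs B (length ys) w \<and> B.lc ys w \<in> set_add B (Idl\<^bsub>B\<^esub> (\<phi> ` I)) (ideal_sq B n)}"
proof -
  define r where "r = length xs"
  define s where "s = length ys"
  define PA where "PA = {a. vecs A r a \<and> A.lc xs a \<in> set_add A I (ideal_sq A m)}"
  define PB where "PB = {w. vecs B s w \<and> B.lc ys w \<in> set_add B (Idl\<^bsub>B\<^esub> (\<phi> ` I)) (ideal_sq B n)}"
  have xsc: "set xs \<subseteq> carrier A" using xs A.M_carr by blast
  have ysc: "set ys \<subseteq> carrier B" using ys B.M_carr by blast
  have xi: "\<And>i. i < r \<Longrightarrow> xs ! i \<in> carrier A" using xsc unfolding r_def by simp
  have PAv: "PA \<subseteq> {a. vecs A r a}" unfolding PA_def by blast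
  have PBv: "PB \<subseteq> {a. vecs B s a}" unfolding PB_def by blast
  define d where "d = dimS A m r PA"
  obtain u where u: "\<forall>j<d. u j \<in> PA" "indep_mod A m r u d" using A.dim_ex[OF PAv] unfolding d_def by blast
  have uc: "\<And>l i. l < d \<Longrightarrow> i < r \<Longrightarrow> u l i \<in> carrier A" using u(1) unfolding PA_def vecs_def by blast
  have "\<forall>i. \<exists>\<mu>. i < r \<longrightarrow> (vecs B s \<mu> \<and> \<phi> (xs ! i) = B.lc ys \<mu>)"
  proof (intro allI)
    fix i
    show "\<exists>\<mu>. i < r \<longrightarrow> (vecs B s \<mu> \<and> \<phi> (xs ! i) = B.lc ys \<mu>)"
    proof (cases "i < r")
      case True
      then have "\<phi> (xs ! i) \<in> Idl\<^bsub>B\<^esub> (set ys)" using phi_m xs(1) ys(2) unfolding r_def by simp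
      then show ?thesis unfolding B.genideal_lc[OF ysc] vecs_def s_def by blast
    qed simp
  qed
  then obtain Mx where Mx: "\<And>i. i < r \<Longrightarrow> vecs B s (Mx i) \<and> \<phi> (xs ! i) = B.lc ys (Mx i)" by metis
  have Mc: "\<And>i j. i < r \<Longrightarrow> j < s \<Longrightarrow> Mx i j \<in> carrier B" using Mx unfolding vecs_def by blast
  have lcMc: "\<And>i. i < r \<Longrightarrow> B.lc ys (Mx i) \<in> carrier B"
  proof -
    fix i assume i: "i < r"
    have "\<phi> (xs ! i) \<in> carrier B" using xi[OF i] by simp
    then show "B.lc ys (Mx i) \<in> carrier B" using Mx[OF i] by simp
  qed
  define w where "w l j = (\<Oplus>\<^bsub>B\<^esub>i\<in>{..<r}. \<phi> (u l i) \<otimes>\<^bsub>B\<^esub> Mx i j)" for l j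
  have wc: "\<And>l j. l < d \<Longrightarrow> j < s \<Longrightarrow> w l j \<in> carrier B" unfolding w_def using uc Mc by (auto intro!: B.finsum_closed)
  have lcw: "B.lc ys (w l) = \<phi> (A.lc xs (u l))" if l: "l < d" for l
  proof -
    have "B.lc ys (w l) = (\<Oplus>\<^bsub>B\<^esub>i\<in>{..<r}. \<phi> (u l i) \<otimes>\<^bsub>B\<^esub> B.lc ys (Mx i))"
      unfolding w_def by (rule B.lc_sum[symmetric]) (use ysc uc l Mc in \<open>auto simp: s_def\<close>)
    also have "\<dots> = (\<Oplus>\<^bsub>B\<^esub>i\<in>{..<r}. \<phi> (xs ! i) \<otimes>\<^bsub>B\<^esub> \<phi> (u l i))"
    proof (intro B.finsum_cong')
      fix i assume i: "i \<in> {..<r}"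
      then have e: "B.lc ys (Mx i) = \<phi> (xs ! i)" using Mx by simp
      show "\<phi> (u l i) \<otimes>\<^bsub>B\<^esub> B.lc ys (Mx i) = \<phi> (xs ! i) \<otimes>\<^bsub>B\<^esub> \<phi> (u l i)"
        unfolding e using B.m_comm[of "\<phi> (u l i)" "\<phi> (xs ! i)"] uc xi i l by simp
    qed (use xi uc l in \<open>auto simp: Pi_def\<close>)
    also have "\<dots> = \<phi> (A.lc xs (u l))" unfolding A.lc_def r_def[symmetric]
      by (rule phi_fs[symmetric]) (use xi uc l in auto)
    finally show ?thesis .
  qed
  have wPB: "\<forall>l<d. w l \<in> PB"
  proof (intro allI impI)
    fix l assume l: "l < d"
    have "A.lc xs (u l) \<in> set_add A I (ideal_sq A m)" using u(1) l unfolding PA_def by blast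
    then obtain a b where ab: "a \<in> I" "b \<in> ideal_sq A m" "A.lc xs (u l) = a \<oplus> b" unfolding set_add_mem by blast
    have ac: "a \<in> carrier A" using ab ideal.Icarr[OF I(1)] by blast
    have bc: "b \<in> carrier A" using ab ideal.Icarr[OF A.sq_ideal] by blast
    have "B.lc ys (w l) = \<phi> a \<oplus>\<^bsub>B\<^esub> \<phi> b" using lcw[OF l] ab ac bc by simp
    moreover have "\<phi> a \<in> Idl\<^bsub>B\<^esub> (\<phi> ` I)" using ab(1) B.genideal_self[of "\<phi> ` I"] ideal.Icarr[OF I(1)] by auto
    moreover have "\<phi> b \<in> ideal_sq B n" using phi_sq ab by blast
    ultimately have "B.lc ys (w l) \<in> set_add B (Idl\<^bsub>B\<^esub> (\<phi> ` I)) (ideal_sq B n)" unfolding set_add_mem by blast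
    then show "w l \<in> PB" unfolding PB_def vecs_def using wc l by blast
  qed
  have "indep_mod B n s w d"
    unfolding indep_mod_def
  proof (intro allI impI)
    fix c l assume c: "(\<forall>j<d. c j \<in> carrier B) \<and> (\<forall>i<s. (\<Oplus>\<^bsub>B\<^esub>j\<in>{..<d}. c j \<otimes>\<^bsub>B\<^esub> w j i) \<in> n)" and l: "l < d"
    define e where "e i = (\<Oplus>\<^bsub>B\<^esub>l\<in>{..<d}. c l \<otimes>\<^bsub>B\<^esub> \<phi> (u l i))" for i
    have ec: "\<And>i. i < r \<Longrightarrow> e i \<in> carrier B" unfolding e_def using c uc by (auto intro!: B.finsum_closed)
    have swap: "(\<Oplus>\<^bsub>B\<^esub>l\<in>{..<d}. c l \<otimes>\<^bsub>B\<^esub> w l j) = (\<Oplus>\<^bsub>B\<^esub>i\<in>{..<r}. e i \<otimes>\<^bsub>B\<^esub> Mx i j)" if j: "j < s" for j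
    proof -
      have "(\<Oplus>\<^bsub>B\<^esub>l\<in>{..<d}. c l \<otimes>\<^bsub>B\<^esub> w l j) = (\<Oplus>\<^bsub>B\<^esub>l\<in>{..<d}. \<Oplus>\<^bsub>B\<^esub>i\<in>{..<r}. c l \<otimes>\<^bsub>B\<^esub> (\<phi> (u l i) \<otimes>\<^bsub>B\<^esub> Mx i j))"
        unfolding w_def using c uc Mc j by (intro B.finsum_cong') (auto simp: Pi_def B.finsum_rdistr intro!: B.finsum_closed)
      also have "\<dots> = (\<Oplus>\<^bsub>B\<^esub>i\<in>{..<r}. \<Oplus>\<^bsub>B\<^esub>l\<in>{..<d}. c l \<otimes>\<^bsub>B\<^esub> (\<phi> (u l i) \<otimes>\<^bsub>B\<^esub> Mx i j))"
        by (rule B.fs_swap) (use c uc Mc j in auto)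
      also have "\<dots> = (\<Oplus>\<^bsub>B\<^esub>i\<in>{..<r}. e i \<otimes>\<^bsub>B\<^esub> Mx i j)"
      proof (intro B.finsum_cong')
        fix i assume i: "i \<in> {..<r}"
        have "(\<Oplus>\<^bsub>B\<^esub>l\<in>{..<d}. c l \<otimes>\<^bsub>B\<^esub> (\<phi> (u l i) \<otimes>\<^bsub>B\<^esub> Mx i j)) = (\<Oplus>\<^bsub>B\<^esub>l\<in>{..<d}. (c l \<otimes>\<^bsub>B\<^esub> \<phi> (u l i)) \<otimes>\<^bsub>B\<^esub> Mx i j)"
          using c uc Mc i j by (intro B.finsum_cong') (auto simp: Pi_def B.m_assoc)
        also have "\<dots> = e i \<otimes>\<^bsub>B\<^esub> Mx i j" unfolding e_def
          using c uc Mc i j by (subst B.finsum_ldistr) (auto simp: Pi_def)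
        finally show "(\<Oplus>\<^bsub>B\<^esub>l\<in>{..<d}. c l \<otimes>\<^bsub>B\<^esub> (\<phi> (u l i) \<otimes>\<^bsub>B\<^esub> Mx i j)) = e i \<otimes>\<^bsub>B\<^esub> Mx i j" .
      qed (use ec Mc j in \<open>auto simp: Pi_def\<close>)
      finally show ?thesis .
    qed
    define f where "f j = (\<Oplus>\<^bsub>B\<^esub>i\<in>{..<r}. e i \<otimes>\<^bsub>B\<^esub> Mx i j)" for j
    have fn: "\<And>j. j < s \<Longrightarrow> f j \<in> n" unfolding f_def using swap c by metis
    have "B.lc ys f \<in> ideal_sq B n" by (rule B.lc_sq[OF ys(1)]) (use fn s_def in auto)
    moreover have "B.lc ys f = (\<Oplus>\<^bsub>B\<^esub>i\<in>{..<r}. e i \<otimes>\<^bsub>B\<^esub> B.lc ys (Mx i))"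
      unfolding f_def by (rule B.lc_sum[symmetric]) (use ysc ec Mc in \<open>auto simp: s_def\<close>)
    moreover have "(\<Oplus>\<^bsub>B\<^esub>i\<in>{..<r}. e i \<otimes>\<^bsub>B\<^esub> B.lc ys (Mx i)) = B.lc (map \<phi> xs @ zs) (\<lambda>i. if i < r then e i else \<zero>\<^bsub>B\<^esub>)"
    proof -
      have ysc': "set (map \<phi> xs @ zs) \<subseteq> carrier B" using ys'(1) B.M_carr by blast
      have "B.lc (map \<phi> xs @ zs) (\<lambda>i. if i < r then e i else \<zero>\<^bsub>B\<^esub>)
          = (\<Oplus>\<^bsub>B\<^esub>i\<in>{..<r}. (map \<phi> xs @ zs) ! i \<otimes>\<^bsub>B\<^esub> (if i < r then e i else \<zero>\<^bsub>B\<^esub>))"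
        unfolding B.lc_def by (rule B.fs_extend) (use ysc' ec in \<open>auto simp: r_def Pi_def\<close>)
      also have "\<dots> = (\<Oplus>\<^bsub>B\<^esub>i\<in>{..<r}. e i \<otimes>\<^bsub>B\<^esub> B.lc ys (Mx i))"
      proof (intro B.finsum_cong')
        fix i assume i: "i \<in> {..<r}"
        then have e: "B.lc ys (Mx i) = \<phi> (xs ! i)" using Mx by simp
        have "(map \<phi> xs @ zs) ! i = \<phi> (xs ! i)" using i by (simp add: nth_append r_def)
        then show "(map \<phi> xs @ zs) ! i \<otimes>\<^bsub>B\<^esub> (if i < r then e i else \<zero>\<^bsub>B\<^esub>) = e i \<otimes>\<^bsub>B\<^esub> B.lc ys (Mx i)"
          unfolding e using B.m_comm[of "e i" "\<phi> (xs ! i)"] ec xi i by simp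
      qed (use ec lcMc in \<open>auto simp: Pi_def\<close>)
      finally show ?thesis by simp
    qed
    ultimately have "B.lc (map \<phi> xs @ zs) (\<lambda>i. if i < r then e i else \<zero>\<^bsub>B\<^esub>) \<in> ideal_sq B n" by simp
    then have "\<forall>i<length (map \<phi> xs @ zs). (if i < r then e i else \<zero>\<^bsub>B\<^esub>) \<in> n"
      by (intro B.key_lemma[OF ys'(1,2,3)]) (use ec in auto)
    then have "\<forall>i<r. e i \<in> n"
    proof (intro allI impI)
      fix i assume H: "\<forall>i<length (map \<phi> xs @ zs). (if i < r then e i else \<zero>\<^bsub>B\<^esub>) \<in> n" and i: "i < r"
      have "i < length (map \<phi> xs @ zs)" using i unfolding r_def by simp
      then show "e i \<in> n" using H i by fastforce
    qed
    then have "\<forall>l<d. c l \<in> n" by (intro flat[OF _ u(2)]) (use u(1) c in \<open>auto simp: PA_def e_def\<close>)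
    then show "c l \<in> n" using l by blast
  qed
  then have "d \<le> dimS B n s PB" using B.dim_ge[OF PBv wPB] by blast
  then show ?thesis unfolding d_def PA_def PB_def r_def s_def by simp
qed

end


context cring
begin
lemma alg11: "x \<in> carrier R \<Longrightarrow> y \<in> carrier R \<Longrightarrow> x \<oplus> (y \<ominus> x) = y" by algebra
end

context lhom
begin

lemma main3:
  assumes xs: "set xs \<subseteq> m" "Idl (set xs) = m"
    and ys: "set ys \<subseteq> n" "Idl\<^bsub>B\<^esub> (set ys) = n"
    and minl: "\<forall>zs. set zs \<subseteq> n \<and> Idl\<^bsub>B\<^esub> (set zs) = n \<longrightarrow> length ys \<le> length zs"
    and xs': "set xs' \<subseteq> m" "Idl (set xs') = m" "length xs' = length xs"
    and eq: "dimS A m (length xs) {a. vecs A (length xs) a \<and> A.lc xs a \<in> set_add A m (ideal_sq A m)}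
      = dimS B n (length ys) {w. vecs B (length ys) w \<and> B.lc ys w \<in> set_add B (Idl\<^bsub>B\<^esub> (\<phi> ` m)) (ideal_sq B n)}"
  shows "\<exists>zs. set (map \<phi> xs' @ zs) \<subseteq> n \<and> Idl\<^bsub>B\<^esub> (set (map \<phi> xs' @ zs)) = n \<and> length (map \<phi> xs' @ zs) = length ys"
proof -
  define r where "r = length xs"
  define s where "s = length ys"
  define PA where "PA = {a. vecs A r a \<and> A.lc xs a \<in> set_add A m (ideal_sq A m)}"
  define PB where "PB = {w. vecs B s w \<and> B.lc ys w \<in> set_add B (Idl\<^bsub>B\<^esub> (\<phi> ` m)) (ideal_sq B n)}"
  have xsc: "set xs \<subseteq> carrier A" using xs A.M_carr by blast
  have xsc': "set xs' \<subseteq> carrier A" using xs' A.M_carr by blast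
  have ysc: "set ys \<subseteq> carrier B" using ys B.M_carr by blast
  have xi: "\<And>i. i < r \<Longrightarrow> xs' ! i \<in> carrier A" using xsc' xs'(3) unfolding r_def by simp
  have PAv: "PA \<subseteq> {a. vecs A r a}" unfolding PA_def by blast
  have PBv: "PB \<subseteq> {a. vecs B s a}" unfolding PB_def by blast
  have "r \<le> dimS A m r PA"
  proof (rule A.dim_ge[OF PAv, of r "ev A"])
    show "\<forall>j<r. ev A j \<in> PA"
    proof (intro allI impI)
      fix j assume "j < r"
      have "A.lc xs (ev A j) \<in> m" by (rule A.lc_in_ideal[OF A.M_ideal xs(1)]) (auto simp: ev_def)
      then show "ev A j \<in> PA" unfolding PA_def using A.ev_vecs I_sub_U[OF A.M_ideal] by blast
    qed
    show "indep_mod A m r (ev A) r" unfolding indep_mod_eq using A.ev_indep by simp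
  qed
  then have dB: "dimS B n s PB = r" using A.dim_le_r[OF PAv] eq unfolding PA_def PB_def r_def s_def by simp
  have "\<forall>i. \<exists>\<mu>. i < r \<longrightarrow> (vecs B s \<mu> \<and> \<phi> (xs' ! i) = B.lc ys \<mu>)"
  proof (intro allI)
    fix i
    show "\<exists>\<mu>. i < r \<longrightarrow> (vecs B s \<mu> \<and> \<phi> (xs' ! i) = B.lc ys \<mu>)"
    proof (cases "i < r")
      case True
      then have "\<phi> (xs' ! i) \<in> Idl\<^bsub>B\<^esub> (set ys)" using phi_m xs'(1,3) ys(2) unfolding r_def by simp
      then show ?thesis unfolding B.genideal_lc[OF ysc] vecs_def s_def by blast
    qed simp
  qed
  then obtain Mx where Mx: "\<And>i. i < r \<Longrightarrow> vecs B s (Mx i) \<and> \<phi> (xs' ! i) = B.lc ys (Mx i)" by metis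
  have Mv: "\<forall>l\<in>{..<r}. vecs B s (Mx l)" using Mx by blast
  have lcMc: "\<And>i. i < r \<Longrightarrow> B.lc ys (Mx i) \<in> carrier B"
  proof -
    fix i assume i: "i < r"
    have "\<phi> (xs' ! i) \<in> carrier B" using xi[OF i] by simp
    then show "B.lc ys (Mx i) \<in> carrier B" using Mx[OF i] by simp
  qed
  have spanP: "\<forall>w\<in>PB. spanS B n s {..<r} Mx w"
  proof
    fix w assume w: "w \<in> PB"
    show "spanS B n s {..<r} Mx w" unfolding s_def
    proof (rule B.span_gens[OF ys minl])
      show "\<forall>l<r. vecs B (length ys) (Mx l)" using Mx s_def by blast
      show "\<phi> ` m \<subseteq> carrier B" using A.M_carr by auto
      show "vecs B (length ys) w" "B.lc ys w \<in> set_add B (Idl\<^bsub>B\<^esub> (\<phi> ` m)) (ideal_sq B n)"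
        using w unfolding PB_def s_def by auto
      show "\<forall>x\<in>\<phi> ` m. \<exists>\<beta>. (\<forall>l<r. \<beta> l \<in> carrier B) \<and>
          x \<ominus>\<^bsub>B\<^esub> (\<Oplus>\<^bsub>B\<^esub>l\<in>{..<r}. \<beta> l \<otimes>\<^bsub>B\<^esub> B.lc ys (Mx l)) \<in> ideal_sq B n"
      proof
        fix x assume "x \<in> \<phi> ` m"
        then obtain a where a: "a \<in> m" "x = \<phi> a" by blast
        obtain \<alpha> where \<alpha>: "\<forall>i<r. \<alpha> i \<in> carrier A" "a = A.lc xs' \<alpha>"
          using a xs'(2,3) A.genideal_lc[OF xsc'] unfolding r_def by auto
        have "x = (\<Oplus>\<^bsub>B\<^esub>i\<in>{..<r}. \<phi> (xs' ! i) \<otimes>\<^bsub>B\<^esub> \<phi> (\<alpha> i))"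
          unfolding a(2) \<alpha>(2) A.lc_def xs'(3) r_def[symmetric] by (rule phi_fs) (use xi \<alpha> in auto)
        also have "\<dots> = (\<Oplus>\<^bsub>B\<^esub>l\<in>{..<r}. \<phi> (\<alpha> l) \<otimes>\<^bsub>B\<^esub> B.lc ys (Mx l))"
        proof (intro B.finsum_cong')
          fix i assume i: "i \<in> {..<r}"
          then have e: "B.lc ys (Mx i) = \<phi> (xs' ! i)" using Mx by simp
          show "\<phi> (xs' ! i) \<otimes>\<^bsub>B\<^esub> \<phi> (\<alpha> i) = \<phi> (\<alpha> i) \<otimes>\<^bsub>B\<^esub> B.lc ys (Mx i)"
            unfolding e using B.m_comm[of "\<phi> (\<alpha> i)" "\<phi> (xs' ! i)"] \<alpha> xi i by simp
        qed (use \<alpha> lcMc in \<open>auto simp: Pi_def\<close>)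
        finally have xe: "x = (\<Oplus>\<^bsub>B\<^esub>l\<in>{..<r}. \<phi> (\<alpha> l) \<otimes>\<^bsub>B\<^esub> B.lc ys (Mx l))" .
        have "(\<Oplus>\<^bsub>B\<^esub>l\<in>{..<r}. \<phi> (\<alpha> l) \<otimes>\<^bsub>B\<^esub> B.lc ys (Mx l)) \<in> carrier B"
          using \<alpha> lcMc by (auto intro!: B.finsum_closed)
        then have "x \<ominus>\<^bsub>B\<^esub> (\<Oplus>\<^bsub>B\<^esub>l\<in>{..<r}. \<phi> (\<alpha> l) \<otimes>\<^bsub>B\<^esub> B.lc ys (Mx l)) = \<zero>\<^bsub>B\<^esub>"
          unfolding xe by (simp add: B.r_neg B.minus_eq)
        then show "\<exists>\<beta>. (\<forall>l<r. \<beta> l \<in> carrier B) \<and>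
          x \<ominus>\<^bsub>B\<^esub> (\<Oplus>\<^bsub>B\<^esub>l\<in>{..<r}. \<beta> l \<otimes>\<^bsub>B\<^esub> B.lc ys (Mx l)) \<in> ideal_sq B n"
          using \<alpha> ideal_zero[OF B.sq_ideal] by (intro exI[of _ "\<lambda>l. \<phi> (\<alpha> l)"] conjI) auto
      qed
    qed
  qed
  have Mind: "indepS B n s Mx {..<r}"
  proof (rule ccontr)
    assume "\<not> indepS B n s Mx {..<r}"
    then have "dimS B n s PB < card {..<r}" using B.dep_dim[OF PBv _ Mv _ spanP] by blast
    then show False using dB by simp
  qed
  have "card {..<r} \<le> s" by (rule B.indep_le_r[OF _ Mv Mind]) simp
  then have rs: "r \<le> s" by simp
  obtain Mx' where Mx': "\<forall>j<r. Mx' j = Mx j" "\<forall>j<s. vecs B s (Mx' j)" "indep_mod B n s Mx' s"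
    using B.extend_indep[where d=r and k=s and r=s and u=Mx] Mv Mind rs unfolding indep_mod_eq by auto
  have M'c: "\<And>i j. i < s \<Longrightarrow> j < s \<Longrightarrow> Mx' i j \<in> carrier B" using Mx'(2) unfolding vecs_def by blast
  define zs where "zs = map (\<lambda>i. B.lc ys (Mx' i)) [r..<s]"
  define ys' where "ys' = map \<phi> xs' @ zs"
  have len: "length ys' = s" unfolding ys'_def zs_def using xs'(3) rs r_def by simp
  have nth': "ys' ! i = B.lc ys (Mx' i)" if i: "i < s" for i
  proof (cases "i < r")
    case True
    then have "ys' ! i = \<phi> (xs' ! i)" unfolding ys'_def using xs'(3) r_def by (simp add: nth_append)
    then show ?thesis using Mx True Mx'(1) by simp
  next
    case False
    then have "ys' ! i = zs ! (i - r)" unfolding ys'_def using xs'(3) r_def by (simp add: nth_append)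
    also have "\<dots> = B.lc ys (Mx' ([r..<s] ! (i - r)))"
      unfolding zs_def using False i by (intro nth_map) simp
    also have "[r..<s] ! (i - r) = r + (i - r)" using False i by (intro nth_upt) simp
    also have "r + (i - r) = i" using False by simp
    finally show ?thesis .
  qed
  have lcn: "\<And>i. i < s \<Longrightarrow> B.lc ys (Mx' i) \<in> n"
    by (rule B.lc_in_ideal[OF B.M_ideal ys(1)]) (use M'c s_def in auto)
  have setn: "set ys' \<subseteq> n"
  proof
    fix y assume "y \<in> set ys'"
    then obtain i where "i < length ys'" "y = ys' ! i" by (auto simp: in_set_conv_nth)
    then show "y \<in> n" using nth' lcn len by simp
  qed
  have ys'c: "set ys' \<subseteq> carrier B" using setn B.M_carr by blast
  define K where "K = Idl\<^bsub>B\<^esub> (set ys')"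
  have Kid: "ideal K B" unfolding K_def using B.genideal_ideal[OF ys'c] .
  have "\<forall>j<length ys. \<exists>a\<in>K. \<exists>\<epsilon>. (\<forall>t<length ys. \<epsilon> t \<in> n) \<and> ys ! j = a \<oplus>\<^bsub>B\<^esub> B.lc ys \<epsilon>"
  proof (intro allI impI)
    fix j assume j: "j < length ys"
    obtain V where V: "\<forall>i\<in>{..<s}. V i \<in> carrier B" "\<forall>t<s. ev B j t \<ominus>\<^bsub>B\<^esub> (\<Oplus>\<^bsub>B\<^esub>i\<in>{..<s}. V i \<otimes>\<^bsub>B\<^esub> Mx' i t) \<in> n"
      using B.full_span[OF Mx'(2,3) B.ev_vecs] unfolding spanS_def by blast
    define a where "a = (\<Oplus>\<^bsub>B\<^esub>i\<in>{..<s}. V i \<otimes>\<^bsub>B\<^esub> B.lc ys (Mx' i))"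
    define \<epsilon> where "\<epsilon> t = ev B j t \<ominus>\<^bsub>B\<^esub> (\<Oplus>\<^bsub>B\<^esub>i\<in>{..<s}. V i \<otimes>\<^bsub>B\<^esub> Mx' i t)" for t
    have aK: "a \<in> K" unfolding a_def
    proof (rule B.ideal_finsum[OF Kid])
      fix i assume i: "i \<in> {..<s}"
      have "B.lc ys (Mx' i) \<in> K" using nth'[of i] i len B.genideal_self[OF ys'c] unfolding K_def
        by (metis lessThan_iff nth_mem subsetD)
      then show "V i \<otimes>\<^bsub>B\<^esub> B.lc ys (Mx' i) \<in> K" using ideal.I_l_closed[OF Kid] V i by blast
    qed simp
    have sc: "\<And>t. t < s \<Longrightarrow> (\<Oplus>\<^bsub>B\<^esub>i\<in>{..<s}. V i \<otimes>\<^bsub>B\<^esub> Mx' i t) \<in> carrier B"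
      using V M'c by (auto intro!: B.finsum_closed)
    have "a = B.lc ys (\<lambda>t. \<Oplus>\<^bsub>B\<^esub>i\<in>{..<s}. V i \<otimes>\<^bsub>B\<^esub> Mx' i t)"
      unfolding a_def by (rule B.lc_sum) (use ysc V M'c in \<open>auto simp: s_def\<close>)
    then have "a \<oplus>\<^bsub>B\<^esub> B.lc ys \<epsilon> = B.lc ys (\<lambda>t. (\<Oplus>\<^bsub>B\<^esub>i\<in>{..<s}. V i \<otimes>\<^bsub>B\<^esub> Mx' i t) \<oplus>\<^bsub>B\<^esub> \<epsilon> t)"
      using B.lc_add[OF ysc] sc unfolding \<epsilon>_def s_def by (simp add: ev_def)
    also have "\<dots> = B.lc ys (ev B j)"
      by (rule B.lc_cong[OF ysc]) (use sc B.alg11 in \<open>auto simp: \<epsilon>_def ev_def s_def\<close>)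
    also have "\<dots> = B.lc ys (\<lambda>i. if i = j then \<one>\<^bsub>B\<^esub> else \<zero>\<^bsub>B\<^esub>)"
      by (rule B.lc_cong[OF ysc]) (auto simp: ev_def)
    also have "\<dots> = ys ! j" using B.lc_delta[OF ysc j] .
    finally have "ys ! j = a \<oplus>\<^bsub>B\<^esub> B.lc ys \<epsilon>" by simp
    moreover have "\<forall>t<length ys. \<epsilon> t \<in> n" unfolding \<epsilon>_def using V s_def by blast
    ultimately show "\<exists>a\<in>K. \<exists>\<epsilon>. (\<forall>t<length ys. \<epsilon> t \<in> n) \<and> ys ! j = a \<oplus>\<^bsub>B\<^esub> B.lc ys \<epsilon>"
      using aK by blast
  qed
  then have "\<forall>j<length ys. ys ! j \<in> K" using B.nakayama[OF Kid ysc] by blast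
  then have "set ys \<subseteq> K" by (auto simp: in_set_conv_nth)
  then have "n \<subseteq> K" using B.genideal_minimal[OF Kid] ys(2) by blast
  moreover have "K \<subseteq> n" unfolding K_def using B.genideal_minimal[OF B.M_ideal setn] .
  ultimately have "Idl\<^bsub>B\<^esub> (set ys') = n" unfolding K_def by blast
  then show ?thesis using setn len unfolding ys'_def s_def by blast
qed

end


lemma nlr_props:
  assumes "noetherian_local_ring R"
  defines "xs \<equiv> SOME xs. minimal_basis R xs"
  shows "minimal_basis R xs" "set xs \<subseteq> max_ideal R" "Idl\<^bsub>R\<^esub> (set xs) = max_ideal R"
    "\<forall>zs. set zs \<subseteq> max_ideal R \<and> Idl\<^bsub>R\<^esub> (set zs) = max_ideal R \<longrightarrow> length xs \<le> length zs"
    "set xs \<subseteq> carrier R"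
proof -
  show mb: "minimal_basis R xs" unfolding xs_def using someI_ex[OF nlr_mb_ex[OF assms(1)]] .
  show "set xs \<subseteq> max_ideal R" "Idl\<^bsub>R\<^esub> (set xs) = max_ideal R"
    "\<forall>zs. set zs \<subseteq> max_ideal R \<and> Idl\<^bsub>R\<^esub> (set zs) = max_ideal R \<longrightarrow> length xs \<le> length zs"
    using mb_props[OF mb] by auto
  then show "set xs \<subseteq> carrier R" using lring.M_carr[OF nlr_lring[OF assms(1)]] by blast
qed

lemma rd_q:
  assumes R: "noetherian_local_ring R" and J: "ideal J R" "\<one>\<^bsub>R\<^esub> \<notin> J"
  shows "rd R (R Quot J) (\<lambda>a. J +>\<^bsub>R\<^esub> a) =
    dimS R (max_ideal R) (length (SOME xs. minimal_basis R xs))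
      {a. vecs R (length (SOME xs. minimal_basis R xs)) a \<and>
          cring.lc R (SOME xs. minimal_basis R xs) a \<in> set_add R J (ideal_sq R (max_ideal R))}"
proof -
  have L: "lquot R (max_ideal R) J"
    unfolding lquot_def lquot_axioms_def using nlr_lring[OF R] J by blast
  have "rd R (R Quot J) (a_r_coset R J) =
    dimS R (max_ideal R) (length (SOME xs. minimal_basis R xs))
      {a. vecs R (length (SOME xs. minimal_basis R xs)) a \<and>
          cring.lc R (SOME xs. minimal_basis R xs) a \<in> lquot.U R (max_ideal R) J}"
    by (rule lquot.rd_quot[OF L nlr_props(5)[OF R] refl])
  then show ?thesis unfolding lquot.U_def[OF L] .
qed

theorem corollary2p16:
  fixes A :: "('a, 'c) ring_scheme" and B :: "('b, 'd) ring_scheme" and \<phi> :: "'a \<Rightarrow> 'b"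
  assumes "noetherian_local_ring A" and "noetherian_local_ring B" and "local_hom A B \<phi>"
  shows "(\<forall>I. ideal I A \<and> I \<noteq> carrier A \<longrightarrow>
            rd A (A Quot I) (\<lambda>a. I +>\<^bsub>A\<^esub> a)
              \<ge> rd B (B Quot (Idl\<^bsub>B\<^esub> (\<phi> ` I))) (\<lambda>b. (Idl\<^bsub>B\<^esub> (\<phi> ` I)) +>\<^bsub>B\<^esub> b))
       \<and> (basically_regular A B \<phi> \<longleftrightarrow>
          (\<forall>I. ideal I A \<and> I \<noteq> carrier A \<longrightarrow>
            rd A (A Quot I) (\<lambda>a. I +>\<^bsub>A\<^esub> a)
              = rd B (B Quot (Idl\<^bsub>B\<^esub> (\<phi> ` I))) (\<lambda>b. (Idl\<^bsub>B\<^esub> (\<phi> ` I)) +>\<^bsub>B\<^esub> b)))"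
proof -
  define m where "m = max_ideal A"
  define n where "n = max_ideal B"
  have LH: "lhom A m B n \<phi>"
  proof -
    have h: "\<phi> \<in> ring_hom A B" "\<phi> ` m \<subseteq> n" using assms(3) unfolding local_hom_def m_def n_def by auto
    show ?thesis unfolding lhom_def lhom_axioms_def m_def n_def
      using nlr_lring[OF assms(1)] nlr_lring[OF assms(2)] h[unfolded m_def n_def] by (intro conjI)
  qed
  interpret lhom A m B n \<phi> by (rule LH)
  define xs where "xs = (SOME xs. minimal_basis A xs)"
  define ys where "ys = (SOME xs. minimal_basis B xs)"
  note X = nlr_props[OF assms(1), folded xs_def m_def]
  note Y = nlr_props[OF assms(2), folded ys_def n_def]
  define PA where "PA I = {a. vecs A (length xs) a \<and> A.lc xs a \<in> set_add A I (ideal_sq A m)}" for I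
  define PB where "PB I = {w. vecs B (length ys) w \<and> B.lc ys w \<in> set_add B (Idl\<^bsub>B\<^esub> (\<phi> ` I)) (ideal_sq B n)}" for I
  have prp: "\<one>\<^bsub>A\<^esub> \<notin> I" if I: "ideal I A" "I \<noteq> carrier A" for I
    using I ideal.one_imp_carrier by blast
  have rdA: "rd A (A Quot I) (\<lambda>a. I +>\<^bsub>A\<^esub> a) = dimS A m (length xs) (PA I)"
    if I: "ideal I A" "I \<noteq> carrier A" for I
    using rd_q[OF assms(1) I(1) prp[OF I]] unfolding PA_def xs_def m_def by simp
  have rdB: "rd B (B Quot (Idl\<^bsub>B\<^esub> (\<phi> ` I))) (\<lambda>b. (Idl\<^bsub>B\<^esub> (\<phi> ` I)) +>\<^bsub>B\<^esub> b) = dimS B n (length ys) (PB I)"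
    if I: "ideal I A" "I \<noteq> carrier A" for I
  proof -
    have Ic: "\<phi> ` I \<subseteq> carrier B" using ideal.Icarr[OF I(1)] by auto
    have "\<phi> ` I \<subseteq> n" using A.proper_sub_M[OF I(1) prp[OF I]] loc by blast
    then have "Idl\<^bsub>B\<^esub> (\<phi> ` I) \<subseteq> n" using B.genideal_minimal[OF B.M_ideal] by blast
    then have "\<one>\<^bsub>B\<^esub> \<notin> Idl\<^bsub>B\<^esub> (\<phi> ` I)" using B.one_notin by blast
    then show ?thesis using rd_q[OF assms(2) B.genideal_ideal[OF Ic]] unfolding PB_def ys_def n_def by simp
  qed
  have part1: "dimS B n (length ys) (PB I) \<le> dimS A m (length xs) (PA I)"
    if I: "ideal I A" "I \<noteq> carrier A" for I
    unfolding PA_def PB_def by (rule main1[OF X(2,3) Y(2,3,4) I(1) prp[OF I]])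
  show ?thesis
  proof (intro conjI)
    show "\<forall>I. ideal I A \<and> I \<noteq> carrier A \<longrightarrow>
            rd A (A Quot I) (\<lambda>a. I +>\<^bsub>A\<^esub> a)
              \<ge> rd B (B Quot (Idl\<^bsub>B\<^esub> (\<phi> ` I))) (\<lambda>b. (Idl\<^bsub>B\<^esub> (\<phi> ` I)) +>\<^bsub>B\<^esub> b)"
      using part1 rdA rdB by simp
    show "basically_regular A B \<phi> \<longleftrightarrow>
          (\<forall>I. ideal I A \<and> I \<noteq> carrier A \<longrightarrow>
            rd A (A Quot I) (\<lambda>a. I +>\<^bsub>A\<^esub> a)
              = rd B (B Quot (Idl\<^bsub>B\<^esub> (\<phi> ` I))) (\<lambda>b. (Idl\<^bsub>B\<^esub> (\<phi> ` I)) +>\<^bsub>B\<^esub> b))"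
    proof
      assume br: "basically_regular A B \<phi>"
      then obtain zs where zs: "minimal_basis B (map \<phi> xs @ zs)"
        using X(1) unfolding basically_regular_def by blast
      note Z = mb_props[OF zs, folded n_def]
      show "\<forall>I. ideal I A \<and> I \<noteq> carrier A \<longrightarrow>
            rd A (A Quot I) (\<lambda>a. I +>\<^bsub>A\<^esub> a)
              = rd B (B Quot (Idl\<^bsub>B\<^esub> (\<phi> ` I))) (\<lambda>b. (Idl\<^bsub>B\<^esub> (\<phi> ` I)) +>\<^bsub>B\<^esub> b)"
      proof (intro allI impI)
        fix I assume I: "ideal I A \<and> I \<noteq> carrier A"
        have "dimS A m (length xs) (PA I) \<le> dimS B n (length ys) (PB I)"
          unfolding PA_def PB_def by (rule main2[OF X(2,3) Y(2,3) Z]) (use I prp in auto)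
        then show "rd A (A Quot I) (\<lambda>a. I +>\<^bsub>A\<^esub> a)
              = rd B (B Quot (Idl\<^bsub>B\<^esub> (\<phi> ` I))) (\<lambda>b. (Idl\<^bsub>B\<^esub> (\<phi> ` I)) +>\<^bsub>B\<^esub> b)"
          using part1[of I] rdA[of I] rdB[of I] I by simp
      qed
    next
      assume eqs: "\<forall>I. ideal I A \<and> I \<noteq> carrier A \<longrightarrow>
            rd A (A Quot I) (\<lambda>a. I +>\<^bsub>A\<^esub> a)
              = rd B (B Quot (Idl\<^bsub>B\<^esub> (\<phi> ` I))) (\<lambda>b. (Idl\<^bsub>B\<^esub> (\<phi> ` I)) +>\<^bsub>B\<^esub> b)"
      have mI: "ideal m A" "m \<noteq> carrier A" using A.M_ideal A.one_notin by auto
      have eqm: "dimS A m (length xs) (PA m) = dimS B n (length ys) (PB m)"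
        using eqs rdA[OF mI] rdB[OF mI] mI by simp
      show "basically_regular A B \<phi>"
        unfolding basically_regular_def
      proof (intro allI impI)
        fix xs' assume xs': "minimal_basis A xs'"
        note X' = mb_props[OF xs', folded m_def]
        have len: "length xs' = length xs"
          using xs' X(1) unfolding minimal_basis_def by simp
        obtain zs where zs: "set (map \<phi> xs' @ zs) \<subseteq> n" "Idl\<^bsub>B\<^esub> (set (map \<phi> xs' @ zs)) = n"
          "length (map \<phi> xs' @ zs) = length ys"
          using main3[OF X(2,3) Y(2,3,4) X'(1,2) len eqm[unfolded PA_def PB_def]] by blast
        have "minimal_basis B (map \<phi> xs' @ zs)"
          by (rule mb_intro[OF Y(1)]) (use zs n_def in auto)
        then show "\<exists>ys. minimal_basis B (map \<phi> xs' @ ys)" by blast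
      qed
    qed
  qed
qed

end
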